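(* Let $n>0$ and let $u$ be a weak solution of $(\mathbb P)$ obtained as the limit of a subsequence of positive classical solutions $u_\epsilon$ of $(\mathbb P_\epsilon)$. Let $\Psi$ be a nonempty subset of $(\tfrac12-n,\,2-n)$. Suppose that for every $\alpha\in\Psi$ and every $T>0$ there exist constants $c_1,c_2,\delta>0$, not depending on $\epsilon$, such that for every $\gamma$ with $\frac{1+n+\alpha}{3}\le\gamma\le\frac{1+n+\alpha}{3}+\delta$, $$\int_{Q_T}u_\epsilon^{\alpha+n-2\gamma+1}\big((u_\epsilon^\gamma)_{xx}\big)^2\,dx\,dt\le c_1,\qquad \int_{Q_T}u_\epsilon^{\alpha+n-3}(u_\epsilon)_x^4\,dx\,dt\le c_2.$$ Then for almost every $t>0$, $u^{1/\beta}(\cdot,t)\in C^1([-a,a])$ for all $\beta\in\big(0,\frac{3}{n+\inf\Psi+1}\big)$.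
   Context: Notation: $\Omega=(-a,a)$, $Q_T=\Omega\times(0,T)$. Problem $(\mathbb P)$: $u_t+\big(u^n(u_{xxx}+\nu u^{m-n}u_x-Au^{M-n}u_x)\big)_x=0$ in $\Omega\times(0,\infty)$ with $\nu=\pm1$, $A\ge0$, $m<M$; $u_x(\pm a,t)=u_{xxx}(\pm a,t)=0$ whenever $u(\pm a,t)\ne0$; $u(x,0)=u_0(x)$, $u_0\in H^1(\Omega)$, $u_0\ge0$, $u_0\not\equiv0$. Weak solutions are nonnegative Hölder continuous functions in $L^\infty(0,\infty;H^1(\Omega))$ satisfying the equation in the integral sense. Regularized problem $(\mathbb P_\epsilon)$: same equation with $u^n$ replaced by $f_\epsilon(u)=|u|^{n+4}/(\epsilon|u|^n+u^4)$, boundary conditions $u_x=u_{xxx}=0$ at $x=\pm a$, smooth positive initial data $u_{0\epsilon}\ge u_0+\epsilon^\theta$ converging to $u_0$ in $H^1(\Omega)$. "Obtained as the limit of a subsequence" means $u_{\epsilon_k}\to u$ uniformly on $\overline Q_T$ for every $T$, $\epsilon_k\to0$. *)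

theory Defs
  imports "HOL-Analysis.Analysis"
begin

text \<open>Functions of (x,t) are written curried: u x t.  Omega = (-a,a).\<close>

definition f_eps :: "real \<Rightarrow> real \<Rightarrow> real \<Rightarrow> real" where
  "f_eps n \<epsilon> s = \<bar>s\<bar> powr (n + 4) / (\<epsilon> * \<bar>s\<bar> powr n + s ^ 4)"

definition C1_on_interval :: "real \<Rightarrow> real \<Rightarrow> (real \<Rightarrow> real) \<Rightarrow> bool" where
  "C1_on_interval lo hi f \<longleftrightarrow>
     (\<exists>g. continuous_on {lo..hi} g \<and>
          (\<forall>x\<in>{lo..hi}. (f has_real_derivative g x) (at x within {lo..hi})))"

definition smooth_fun :: "(real \<Rightarrow> real) \<Rightarrow> bool" where
  "smooth_fun g \<longleftrightarrow> (\<forall>k x. ((deriv ^^ k) g) differentiable (at x))"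

definition L2_on :: "real \<Rightarrow> (real \<Rightarrow> real) \<Rightarrow> bool" where
  "L2_on a v \<longleftrightarrow> set_borel_measurable lborel {-a<..<a} v \<and>
                  set_integrable lborel {-a<..<a} (\<lambda>x. (v x)\<^sup>2)"

definition weak_deriv_on :: "real \<Rightarrow> (real \<Rightarrow> real) \<Rightarrow> (real \<Rightarrow> real) \<Rightarrow> bool" where
  "weak_deriv_on a v g \<longleftrightarrow>
     set_integrable lborel {-a<..<a} v \<and> set_integrable lborel {-a<..<a} g \<and>
     (\<forall>\<phi> \<phi>'. (\<forall>x. (\<phi> has_real_derivative \<phi>' x) (at x)) \<and> continuous_on UNIV \<phi>' \<and>
               (\<exists>b<a. \<forall>x. b \<le> \<bar>x\<bar> \<longrightarrow> \<phi> x = 0) \<longrightarrow>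
        (LINT x:{-a<..<a}|lborel. v x * \<phi>' x) = - (LINT x:{-a<..<a}|lborel. g x * \<phi> x))"

definition in_H1 :: "real \<Rightarrow> (real \<Rightarrow> real) \<Rightarrow> bool" where
  "in_H1 a v \<longleftrightarrow> (\<exists>g. L2_on a v \<and> L2_on a g \<and> weak_deriv_on a v g)"

definition H1_bounded :: "real \<Rightarrow> (real \<Rightarrow> real) \<Rightarrow> real \<Rightarrow> bool" where
  "H1_bounded a v K \<longleftrightarrow> (\<exists>g. L2_on a v \<and> L2_on a g \<and> weak_deriv_on a v g \<and>
       (LINT x:{-a<..<a}|lborel. (v x)\<^sup>2 + (g x)\<^sup>2) \<le> K)"

definition H1_conv :: "real \<Rightarrow> (real \<Rightarrow> real \<Rightarrow> real) \<Rightarrow> (real \<Rightarrow> real) \<Rightarrow> bool" where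
  "H1_conv a F v \<longleftrightarrow> (\<exists>g. L2_on a v \<and> L2_on a g \<and> weak_deriv_on a v g \<and>
     ((\<lambda>\<epsilon>. LINT x:{-a<..<a}|lborel. (F \<epsilon> x - v x)\<^sup>2 + (deriv (F \<epsilon>) x - g x)\<^sup>2)
        \<longlongrightarrow> 0) (at_right 0))"

definition holder_on :: "(real \<times> real) set \<Rightarrow> (real \<times> real \<Rightarrow> real) \<Rightarrow> bool" where
  "holder_on S f \<longleftrightarrow> (\<exists>C e. 0 \<le> C \<and> 0 < e \<and> e \<le> 1 \<and>
      (\<forall>p\<in>S. \<forall>q\<in>S. \<bar>f p - f q\<bar> \<le> C * dist p q powr e))"

text \<open>Positive classical solution of (P_eps) on [-a,a] x [0,infinity) with initial datum v0:
  u in C^{4,1} on [-a,a] x (0,infinity), continuous up to t = 0, equation pointwise,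
  u_x = u_xxx = 0 at x = +-a.\<close>
definition classical_sol_eps ::
  "real \<Rightarrow> real \<Rightarrow> real \<Rightarrow> real \<Rightarrow> real \<Rightarrow> real \<Rightarrow> real \<Rightarrow> (real \<Rightarrow> real) \<Rightarrow> (real \<Rightarrow> real \<Rightarrow> real) \<Rightarrow> bool"
where
  "classical_sol_eps a n \<nu> A m M \<epsilon> v0 u \<longleftrightarrow>
     (\<forall>x\<in>{-a..a}. \<forall>t\<ge>0. u x t > 0) \<and>
     continuous_on ({-a..a} \<times> {0..}) (\<lambda>p. u (fst p) (snd p)) \<and>
     (\<forall>x\<in>{-a..a}. u x 0 = v0 x) \<and>
     (\<exists>u1 u2 u3 u4 ut.
        continuous_on ({-a..a} \<times> {0<..}) (\<lambda>p. u1 (fst p) (snd p)) \<and>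
        continuous_on ({-a..a} \<times> {0<..}) (\<lambda>p. u2 (fst p) (snd p)) \<and>
        continuous_on ({-a..a} \<times> {0<..}) (\<lambda>p. u3 (fst p) (snd p)) \<and>
        continuous_on ({-a..a} \<times> {0<..}) (\<lambda>p. u4 (fst p) (snd p)) \<and>
        continuous_on ({-a..a} \<times> {0<..}) (\<lambda>p. ut (fst p) (snd p)) \<and>
        (\<forall>x\<in>{-a..a}. \<forall>t>0.
           ((\<lambda>y. u y t) has_real_derivative u1 x t) (at x within {-a..a}) \<and>
           ((\<lambda>y. u1 y t) has_real_derivative u2 x t) (at x within {-a..a}) \<and>
           ((\<lambda>y. u2 y t) has_real_derivative u3 x t) (at x within {-a..a}) \<and>
           ((\<lambda>y. u3 y t) has_real_derivative u4 x t) (at x within {-a..a}) \<and>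
           ((\<lambda>s. u x s) has_real_derivative ut x t) (at t) \<and>
           ((\<lambda>y. f_eps n \<epsilon> (u y t) *
                  (u3 y t + \<nu> * u y t powr (m - n) * u1 y t - A * u y t powr (M - n) * u1 y t))
              has_real_derivative (- ut x t)) (at x within {-a..a})) \<and>
        (\<forall>t>0. u1 (-a) t = 0 \<and> u1 a t = 0 \<and> u3 (-a) t = 0 \<and> u3 a t = 0))"

definition test_fun :: "real \<Rightarrow> (real \<Rightarrow> real \<Rightarrow> real) \<Rightarrow> (real \<Rightarrow> real \<Rightarrow> real) \<Rightarrow> (real \<Rightarrow> real \<Rightarrow> real) \<Rightarrow> bool" where
  "test_fun T \<phi> \<phi>x \<phi>t \<longleftrightarrow>
     (\<forall>x t. ((\<lambda>y. \<phi> y t) has_real_derivative \<phi>x x t) (at x) \<and>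
            ((\<lambda>s. \<phi> x s) has_real_derivative \<phi>t x t) (at t)) \<and>
     continuous_on UNIV (\<lambda>p. \<phi>x (fst p) (snd p)) \<and>
     continuous_on UNIV (\<lambda>p. \<phi>t (fst p) (snd p)) \<and>
     (\<exists>\<delta>>0. \<forall>x t. t \<le> \<delta> \<or> T - \<delta> \<le> t \<longrightarrow> \<phi> x t = 0)"

text \<open>Weak solution of (P): nonnegative, Hoelder continuous on each closed Q_T,
  in L^infinity(0,infinity;H^1), classical (C^{3} in x) on the positivity set P, where the
  boundary conditions hold, and the integral identity
  int_{Q_T} u phi_t + int_{P cap Q_T} u^n (u_xxx + nu u^{m-n} u_x - A u^{M-n} u_x) phi_x = 0.\<close>
definition weak_sol ::
  "real \<Rightarrow> real \<Rightarrow> real \<Rightarrow> real \<Rightarrow> real \<Rightarrow> real \<Rightarrow> (real \<Rightarrow> real) \<Rightarrow> (real \<Rightarrow> real \<Rightarrow> real) \<Rightarrow> bool"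
where
  "weak_sol a n \<nu> A m M u0 u \<longleftrightarrow>
     (\<forall>x\<in>{-a..a}. \<forall>t\<ge>0. 0 \<le> u x t) \<and>
     (\<forall>T>0. holder_on ({-a..a} \<times> {0..T}) (\<lambda>p. u (fst p) (snd p))) \<and>
     (\<exists>K. AE t in lborel. 0 < t \<longrightarrow> H1_bounded a (\<lambda>x. u x t) K) \<and>
     (\<forall>x\<in>{-a..a}. u x 0 = u0 x) \<and>
     (let P = {p. fst p \<in> {-a..a} \<and> 0 < snd p \<and> 0 < u (fst p) (snd p)} in
      \<exists>u1 u2 u3.
        (\<forall>(x,t)\<in>P.
           ((\<lambda>y. u y t) has_real_derivative u1 x t) (at x within {-a..a}) \<and>
           ((\<lambda>y. u1 y t) has_real_derivative u2 x t) (at x within {-a..a}) \<and>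
           ((\<lambda>y. u2 y t) has_real_derivative u3 x t) (at x within {-a..a})) \<and>
        (\<forall>t>0. (u (-a) t \<noteq> 0 \<longrightarrow> u1 (-a) t = 0 \<and> u3 (-a) t = 0) \<and>
               (u a t \<noteq> 0 \<longrightarrow> u1 a t = 0 \<and> u3 a t = 0)) \<and>
        (\<forall>T>0. \<forall>\<phi> \<phi>x \<phi>t. test_fun T \<phi> \<phi>x \<phi>t \<longrightarrow>
           (let QT = {-a<..<a} \<times> {0<..<T};
                flux = (\<lambda>p. u (fst p) (snd p) powr n *
                   (u3 (fst p) (snd p) + \<nu> * u (fst p) (snd p) powr (m - n) * u1 (fst p) (snd p)
                    - A * u (fst p) (snd p) powr (M - n) * u1 (fst p) (snd p)) *
                   \<phi>x (fst p) (snd p))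
            in set_integrable lborel QT (\<lambda>p. u (fst p) (snd p) * \<phi>t (fst p) (snd p)) \<and>
               set_integrable lborel (P \<inter> QT) flux \<and>
               (LINT p:QT|lborel. u (fst p) (snd p) * \<phi>t (fst p) (snd p)) +
               (LINT p:(P \<inter> QT)|lborel. flux p) = 0)))"

definition QT_nn_integral :: "real \<Rightarrow> real \<Rightarrow> (real \<Rightarrow> real \<Rightarrow> real) \<Rightarrow> ennreal" where
  "QT_nn_integral a T F =
     (\<integral>\<^sup>+ p. ennreal (indicator ({-a<..<a} \<times> {0<..<T}) p * F (fst p) (snd p)) \<partial>lborel)"

end

theory Submission
  imports Defs
begin


lemma abs3_deriv: "((\<lambda>s::real. \<bar>s\<bar>^3) has_real_derivative 3 * s * \<bar>s\<bar>) (at s)"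
proof (cases "s = 0")
  case True
  have "((\<lambda>y::real. (\<bar>y\<bar>^3 - \<bar>0\<bar>^3) / (y - 0)) \<longlongrightarrow> 0) (at 0)"
  proof (rule Lim_null_comparison[where g="\<lambda>y. y^2"])
    show "\<forall>\<^sub>F y in at (0::real). norm ((\<bar>y\<bar>^3 - \<bar>0\<bar>^3) / (y - 0)) \<le> y^2"
      by (auto simp: abs_mult power_abs eval_nat_numeral field_simps)
    show "((\<lambda>y::real. y^2) \<longlongrightarrow> 0) (at 0)"
      by (auto intro!: tendsto_eq_intros)
  qed
  then show ?thesis using True by (simp add: has_field_derivative_iff)
next
  case False
  show ?thesis
  proof (cases "s > 0")
    case True
    have ev: "\<forall>\<^sub>F y in nhds s. \<bar>y\<bar>^3 = y^3"
      using eventually_nhds_in_open[of "{0<..}" s] True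
      by (auto elim!: eventually_mono)
    have "((\<lambda>y::real. y^3) has_real_derivative 3 * s * \<bar>s\<bar>) (at s)"
      using True by (auto intro!: derivative_eq_intros simp: power2_eq_square)
    then show ?thesis
      by (rule DERIV_cong_ev[THEN iffD1, rotated -1]) (use ev in \<open>auto elim!: eventually_mono\<close>)
  next
    case False2: False
    then have neg: "s < 0" using False by auto
    have ev: "\<forall>\<^sub>F y in nhds s. \<bar>y\<bar>^3 = -(y^3)"
      using eventually_nhds_in_open[of "{..<0}" s] neg
      by (auto elim!: eventually_mono)
    have "((\<lambda>y::real. -(y^3)) has_real_derivative 3 * s * \<bar>s\<bar>) (at s)"
      using neg by (auto intro!: derivative_eq_intros simp: power2_eq_square)
    then show ?thesis
      by (rule DERIV_cong_ev[THEN iffD1, rotated -1]) (use ev in \<open>auto elim!: eventually_mono\<close>)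
  qed
qed

lemma core_ineq:
  fixes P Q k z z' :: real
  assumes "0 \<le> P" "0 \<le> Q" "\<bar>k\<bar> \<le> 3"
  shows "3*z*\<bar>z\<bar>*z'*(P*Q) + \<bar>z\<bar>^3*(k*Q^2*z) \<le> 5*(P^2*z'^2 + Q^2*z^4)"
proof -
  have sq: "2*((P*\<bar>z'\<bar>)*(Q*z^2)) \<le> (P*\<bar>z'\<bar>)^2 + (Q*z^2)^2"
    using sum_squares_bound[of "P*\<bar>z'\<bar>" "Q*z^2"] by (metis mult.assoc)
  have t1: "3*z*\<bar>z\<bar>*z'*(P*Q) \<le> 3*((P*\<bar>z'\<bar>)*(Q*z^2))"
  proof -
    have "z*\<bar>z\<bar>*z' \<le> \<bar>z*\<bar>z\<bar>*z'\<bar>" by simp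
    also have "\<dots> = \<bar>z'\<bar>*z^2" by (simp add: abs_mult power2_eq_square)
    finally have "z*\<bar>z\<bar>*z'*(P*Q) \<le> \<bar>z'\<bar>*z^2*(P*Q)"
      using assms by (intro mult_right_mono) auto
    then show ?thesis by (simp add: algebra_simps)
  qed
  have t2: "\<bar>z\<bar>^3*(k*Q^2*z) \<le> 3*(Q^2*z^4)"
  proof -
    have "\<bar>z\<bar>^3*(k*Q^2*z) \<le> \<bar>\<bar>z\<bar>^3*(k*Q^2*z)\<bar>" by simp
    also have "\<dots> = \<bar>k\<bar>*(Q^2*z^4)" by (simp add: abs_mult power_abs eval_nat_numeral)
    also have "\<dots> \<le> 3*(Q^2*z^4)" using assms by (intro mult_right_mono) auto
    finally show ?thesis .
  qed
  have eqs: "(P*\<bar>z'\<bar>)^2 = P^2*z'^2" "(Q*z^2)^2 = Q^2*z^4"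
    by (simp_all add: power_mult_distrib power2_abs)
  have gen: "\<And>(L1::real) (L2::real) (X::real) (A::real) (B::real) (A'::real) (B'::real). L1 \<le> 3*X \<Longrightarrow> L2 \<le> 3*B' \<Longrightarrow> 2*X \<le> A+B \<Longrightarrow> A = A' \<Longrightarrow> B = B' \<Longrightarrow> 0 \<le> A' \<Longrightarrow> 0 \<le> B' \<Longrightarrow> L1 + L2 \<le> 5*(A'+B')"
    by (smt (verit))
  have nn: "0 \<le> P^2*z'^2" "0 \<le> Q^2*z^4" by simp_all
  show ?thesis by (rule gen[OF t1 t2 sq eqs nn])
qed

lemma core_bound:
  fixes w z z' :: "real \<Rightarrow> real" and lo hi r K x :: real
  assumes r: "0 < r" "r < 1"
  and wpos: "\<And>x. x \<in> {lo..hi} \<Longrightarrow> 0 < w x"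
  and dw: "\<And>x. x \<in> {lo..hi} \<Longrightarrow> (w has_real_derivative z x) (at x within {lo..hi})"
  and dz: "\<And>x. x \<in> {lo..hi} \<Longrightarrow> (z has_real_derivative z' x) (at x within {lo..hi})"
  and cz': "continuous_on {lo..hi} z'"
  and z0: "z lo = 0"
  and intb: "\<And>x y. lo \<le> x \<Longrightarrow> x \<le> y \<Longrightarrow> y \<le> hi \<Longrightarrow>
     integral {x..y} (\<lambda>s. w s powr (3*r-2) * (z' s)^2 + w s powr (3*r-4) * (z s)^4) \<le> K"
  and x: "x \<in> {lo..hi}"
  shows "\<bar>z x\<bar>^3 * w x powr (3*r-3) \<le> 5*K"
proof -
  define \<kappa> where "\<kappa> = 3*r-3"
  define G where "G s = \<bar>z s\<bar>^3 * w s powr \<kappa>" for s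
  define G' where "G' s = 3 * z s * \<bar>z s\<bar> * z' s * w s powr \<kappa> + \<bar>z s\<bar>^3 * (\<kappa> * w s powr (\<kappa> - 1) * z s)" for s
  define \<Phi> where "\<Phi> s = w s powr (3*r-2) * (z' s)^2 + w s powr (3*r-4) * (z s)^4" for s
  have sub: "{lo..x} \<subseteq> {lo..hi}" using x by auto
  have cw: "continuous_on {lo..hi} w"
    using dw by (meson DERIV_continuous continuous_on_eq_continuous_within)
  have cz: "continuous_on {lo..hi} z"
    using dz by (meson DERIV_continuous continuous_on_eq_continuous_within)
  have dG: "(G has_real_derivative G' s) (at s within {lo..hi})" if s: "s \<in> {lo..hi}" for s
  proof -
    have d1: "((\<lambda>s. \<bar>z s\<bar>^3) has_real_derivative 3 * z s * \<bar>z s\<bar> * z' s) (at s within {lo..hi})"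
      using DERIV_chain2[OF abs3_deriv dz[OF s]] by simp
    have d2: "((\<lambda>s. w s powr \<kappa>) has_real_derivative \<kappa> * w s powr (\<kappa> - 1) * z s) (at s within {lo..hi})"
      using DERIV_chain2[OF has_real_derivative_powr[OF wpos[OF s]] dw[OF s]] by simp
    show ?thesis unfolding G_def G'_def using DERIV_mult[OF d1 d2] by (simp add: algebra_simps)
  qed
  have ftc: "(G' has_integral G x - G lo) {lo..x}"
    apply (rule fundamental_theorem_of_calculus)
    using x apply simp
    apply (subst has_real_derivative_iff_has_vector_derivative[symmetric])
    using dG sub by (meson DERIV_subset subsetD)
  have G0: "G lo = 0" by (simp add: G_def z0)
  have wne: "\<forall>s\<in>{lo..x}. w s \<noteq> 0" using wpos sub by force
  have cPhi: "continuous_on {lo..x} \<Phi>"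
    unfolding \<Phi>_def using wne
    by (intro continuous_intros continuous_on_subset[OF cw sub] continuous_on_subset[OF cz sub]
        continuous_on_subset[OF cz' sub]) auto
  have iPhi: "(\<Phi> has_integral integral {lo..x} \<Phi>) {lo..x}"
    using integrable_continuous_interval[OF cPhi] by (simp add: has_integral_integral)
  have "G x - G lo \<le> 5 * integral {lo..x} \<Phi>"
  proof (rule has_integral_le[OF ftc has_integral_mult_right[OF iPhi]])
    fix s assume s: "s \<in> {lo..x}"
    then have s': "s \<in> {lo..hi}" using sub by auto
    define W where "W = w s"
    have W: "0 < W" using wpos[OF s'] W_def by simp
    define P where "P = W powr ((3*r-2)/2)"
    define Q where "Q = W powr ((3*r-4)/2)"
    have eP: "(3*r-2)/2*2 = 3*r-2" "(3*r-4)/2*2 = 3*r-4" by simp_all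
    note eQ = eP(2)
    have PP: "P^2 = W powr (3*r-2)"
    proof -
      have "P^2 = P powr 2" using W by (simp add: P_def powr_numeral)
      also have "\<dots> = W powr (3*r-2)" by (simp only: P_def powr_powr eP)
      finally show ?thesis .
    qed
    have QQ: "Q^2 = W powr (3*r-4)"
    proof -
      have "Q^2 = Q powr 2" using W by (simp add: Q_def powr_numeral)
      also have "\<dots> = W powr (3*r-4)" by (simp only: Q_def powr_powr eQ)
      finally show ?thesis .
    qed
    have eK: "(3*r-2)/2 + (3*r-4)/2 = \<kappa>" by (simp add: \<kappa>_def field_simps)
    have PQ: "P*Q = W powr \<kappa>" by (simp only: P_def Q_def powr_add[symmetric] eK)
    have Q1: "W powr (\<kappa> - 1) = Q^2" unfolding QQ \<kappa>_def by (simp add: algebra_simps)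
    have "G' s = 3*z s*\<bar>z s\<bar>*z' s*(P*Q) + \<bar>z s\<bar>^3*(\<kappa>*Q^2*z s)"
      unfolding G'_def using PQ Q1 W_def by simp
    also have "\<dots> \<le> 5*(P^2*(z' s)^2 + Q^2*(z s)^4)"
      by (rule core_ineq) (use r in \<open>auto simp: P_def Q_def \<kappa>_def\<close>)
    also have "\<dots> = 5 * \<Phi> s" unfolding PP QQ \<Phi>_def W_def by simp
    finally show "G' s \<le> 5 * \<Phi> s" .
  qed
  also have "integral {lo..x} \<Phi> \<le> K"
    unfolding \<Phi>_def using intb[of lo x] x by auto
  finally have "G x \<le> 5*K" using G0 by linarith
  then show ?thesis by (simp add: G_def \<kappa>_def)
qed

lemma amgm_lam:
  fixes P R d lam :: real
  assumes "0 < lam" "P * R = 1"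
  shows "\<bar>d\<bar> \<le> lam/2 * (P^2 * d^2) + R^2 / (2*lam)"
proof -
  have "2*((lam*(P*\<bar>d\<bar>))*R) \<le> (lam*(P*\<bar>d\<bar>))^2 + R^2"
    using sum_squares_bound[of "lam*(P*\<bar>d\<bar>)" R] by (metis mult.assoc)
  moreover have "(lam*(P*\<bar>d\<bar>))*R = lam*\<bar>d\<bar>" using assms(2)
    by (metis mult.assoc mult.commute mult.right_neutral)
  moreover have "(lam*(P*\<bar>d\<bar>))^2 = lam^2*(P^2*d^2)"
    by (simp add: power_mult_distrib)
  ultimately have "2*(lam*\<bar>d\<bar>) \<le> lam^2*(P^2*d^2) + R^2" by simp
  then have "\<bar>d\<bar> \<le> (lam^2*(P^2*d^2) + R^2) / (2*lam)"
    using assms(1) by (simp add: field_simps)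
  also have "\<dots> = lam/2 * (P^2 * d^2) + R^2 / (2*lam)"
    using assms(1) by (simp add: field_simps power2_eq_square)
  finally show ?thesis .
qed

lemma core_modulus:
  fixes w z z' :: "real \<Rightarrow> real" and lo hi r K x y eta Mw lam :: real
  assumes r: "0 < r" "r < 1"
  and wpos: "\<And>x. x \<in> {lo..hi} \<Longrightarrow> 0 < w x"
  and dw: "\<And>x. x \<in> {lo..hi} \<Longrightarrow> (w has_real_derivative z x) (at x within {lo..hi})"
  and dz: "\<And>x. x \<in> {lo..hi} \<Longrightarrow> (z has_real_derivative z' x) (at x within {lo..hi})"
  and cz': "continuous_on {lo..hi} z'"
  and intb: "\<And>x y. lo \<le> x \<Longrightarrow> x \<le> y \<Longrightarrow> y \<le> hi \<Longrightarrow>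
     integral {x..y} (\<lambda>s. w s powr (3*r-2) * (z' s)^2 + w s powr (3*r-4) * (z s)^4) \<le> K"
  and xy: "lo \<le> x" "x \<le> y" "y \<le> hi"
  and eta: "0 < eta" and lam: "0 < lam"
  and wb: "\<And>s. s \<in> {x..y} \<Longrightarrow> eta \<le> w s \<and> w s \<le> Mw"
  shows "\<bar>z y - z x\<bar> \<le> lam/2 * K + (y - x) * ((eta powr (2-3*r) + Mw powr (2-3*r)) / (2*lam))"
proof -
  define c where "c = (eta powr (2-3*r) + Mw powr (2-3*r)) / (2*lam)"
  define \<Phi> where "\<Phi> s = w s powr (3*r-2) * (z' s)^2 + w s powr (3*r-4) * (z s)^4" for s
  have sub: "{x..y} \<subseteq> {lo..hi}" using xy by auto
  have cw: "continuous_on {lo..hi} w"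
    using dw by (meson DERIV_continuous continuous_on_eq_continuous_within)
  have cz: "continuous_on {lo..hi} z"
    using dz by (meson DERIV_continuous continuous_on_eq_continuous_within)
  have ftc: "(z' has_integral z y - z x) {x..y}"
    apply (rule fundamental_theorem_of_calculus)
    using xy apply simp
    apply (subst has_real_derivative_iff_has_vector_derivative[symmetric])
    using dz sub by (meson DERIV_subset subsetD)
  have wne: "\<forall>s\<in>{x..y}. w s \<noteq> 0" using wpos[OF subsetD[OF sub]] by (metis less_irrefl)
  have cPhi: "continuous_on {x..y} \<Phi>"
    unfolding \<Phi>_def using wne
    by (intro continuous_intros continuous_on_subset[OF cw sub] continuous_on_subset[OF cz sub]
        continuous_on_subset[OF cz' sub]) auto
  have iPhi: "(\<Phi> has_integral integral {x..y} \<Phi>) {x..y}"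
    using integrable_continuous_interval[OF cPhi] by (simp add: has_integral_integral)
  have iB: "((\<lambda>s. lam/2 * \<Phi> s + c) has_integral (lam/2 * integral {x..y} \<Phi> + (y-x)*c)) {x..y}"
    using has_integral_add[OF has_integral_mult_right[OF iPhi, of "lam/2"] has_integral_const_real[of c x y]]
    using xy by (simp add: algebra_simps)
  have pw: "\<bar>z' s\<bar> \<le> lam/2 * \<Phi> s + c" if s: "s \<in> {x..y}" for s
  proof -
    have s': "s \<in> {lo..hi}" using s sub by auto
    define W where "W = w s"
    have W: "0 < W" using wpos[OF s'] W_def by simp
    define P where "P = W powr ((3*r-2)/2)"
    define R where "R = W powr ((2-3*r)/2)"
    have e0: "(3*r-2)/2 + (2-3*r)/2 = 0" by (simp add: field_simps)
    have PR: "P * R = 1" unfolding P_def R_def using W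
      by (simp only: powr_add[symmetric] e0) simp
    have PP: "P^2 = W powr (3*r-2)"
    proof -
      have e: "(3*r-2)/2*2 = 3*r-2" by simp
      have "P^2 = P powr 2" using W by (simp add: P_def)
      also have "\<dots> = W powr (3*r-2)" by (simp only: P_def powr_powr e)
      finally show ?thesis .
    qed
    have RR: "R^2 = W powr (2-3*r)"
    proof -
      have e: "(2-3*r)/2*2 = 2-3*r" by simp
      have "R^2 = R powr 2" using W by (simp add: R_def)
      also have "\<dots> = W powr (2-3*r)" by (simp only: R_def powr_powr e)
      finally show ?thesis .
    qed
    have wbs: "eta \<le> W" "W \<le> Mw" using wb[OF s] W_def by auto
    have Rb: "R^2 \<le> eta powr (2-3*r) + Mw powr (2-3*r)"
    proof (cases "0 \<le> 2-3*r")
      case True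
      have "W powr (2-3*r) \<le> Mw powr (2-3*r)" using powr_mono2[OF True _ wbs(2)] W by simp
      then show ?thesis unfolding RR by (smt (verit) powr_ge_zero)
    next
      case False
      have "W powr (2-3*r) \<le> eta powr (2-3*r)" using powr_mono2'[of "2-3*r" eta W] False eta wbs(1) by simp
      then show ?thesis unfolding RR by (smt (verit) powr_ge_zero)
    qed
    have "\<bar>z' s\<bar> \<le> lam/2 * (P^2 * (z' s)^2) + R^2 / (2*lam)"
      by (rule amgm_lam[OF lam PR])
    also have "lam/2 * (P^2 * (z' s)^2) \<le> lam/2 * \<Phi> s"
      unfolding \<Phi>_def PP W_def using lam by (intro mult_left_mono) auto
    also have "R^2 / (2*lam) \<le> c" unfolding c_def using Rb lam by (intro divide_right_mono) auto
    finally show ?thesis by simp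
  qed
  have up: "z y - z x \<le> lam/2 * integral {x..y} \<Phi> + (y-x)*c"
    by (rule has_integral_le[OF ftc iB]) (use pw in \<open>auto simp: abs_le_iff\<close>)
  have lo': "-(z y - z x) \<le> lam/2 * integral {x..y} \<Phi> + (y-x)*c"
    by (rule has_integral_le[OF has_integral_neg[OF ftc] iB]) (use pw in \<open>auto simp: abs_le_iff\<close>)
  have "integral {x..y} \<Phi> \<le> K" unfolding \<Phi>_def using intb xy by auto
  then have "lam/2 * integral {x..y} \<Phi> \<le> lam/2 * K" using lam by simp
  then show ?thesis using up lo' unfolding c_def by (simp add: abs_le_iff)
qed

lemma cube_le_imp:
  fixes A B :: real
  assumes "0 \<le> A" "A^3 \<le> B"
  shows "A \<le> B powr (1/3)"
proof (cases "A = 0")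
  case True then show ?thesis by simp
next
  case False
  then have A: "0 < A" using assms by simp
  have "A = A powr (3 * (1/3))" using A by simp
  also have "\<dots> = (A powr 3) powr (1/3)" by (simp only: powr_powr)
  also have "\<dots> = (A^3) powr (1/3)" using A by simp
  also have "\<dots> \<le> B powr (1/3)" using assms A by (intro powr_mono2) auto
  finally show ?thesis .
qed

lemma zbound:
  fixes w z z' :: "real \<Rightarrow> real" and lo hi r K x :: real
  assumes r: "0 < r" "r < 1" and K: "0 \<le> K"
  and wpos: "\<And>x. x \<in> {lo..hi} \<Longrightarrow> 0 < w x"
  and dw: "\<And>x. x \<in> {lo..hi} \<Longrightarrow> (w has_real_derivative z x) (at x within {lo..hi})"
  and dz: "\<And>x. x \<in> {lo..hi} \<Longrightarrow> (z has_real_derivative z' x) (at x within {lo..hi})"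
  and cz': "continuous_on {lo..hi} z'"
  and z0: "z lo = 0"
  and intb: "\<And>x y. lo \<le> x \<Longrightarrow> x \<le> y \<Longrightarrow> y \<le> hi \<Longrightarrow>
     integral {x..y} (\<lambda>s. w s powr (3*r-2) * (z' s)^2 + w s powr (3*r-4) * (z s)^4) \<le> K"
  and x: "x \<in> {lo..hi}"
  shows "\<bar>z x\<bar> \<le> (5*K) powr (1/3) * w x powr (1-r)"
proof -
  have cb: "\<bar>z x\<bar>^3 * w x powr (3*r-3) \<le> 5*K"
    by (rule core_bound[OF r wpos dw dz cz' z0 intb x])
  have W: "0 < w x" using wpos[OF x] .
  have "\<bar>z x\<bar>^3 = (\<bar>z x\<bar>^3 * w x powr (3*r-3)) * w x powr (3-3*r)"
    using W by (simp add: mult.assoc powr_add[symmetric])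
  also have "\<dots> \<le> 5*K * w x powr (3-3*r)"
    using cb by (intro mult_right_mono) auto
  finally have "\<bar>z x\<bar> \<le> (5*K * w x powr (3-3*r)) powr (1/3)"
    by (intro cube_le_imp) auto
  also have "\<dots> = (5*K) powr (1/3) * (w x powr (3-3*r)) powr (1/3)"
    using K W by (simp add: powr_mult)
  also have "(w x powr (3-3*r)) powr (1/3) = w x powr (1-r)"
  proof -
    have e: "(3-3*r)*(1/3) = 1-r" by simp
    show ?thesis by (simp only: powr_powr e)
  qed
  finally show ?thesis .
qed

definition good :: "real \<Rightarrow> real \<Rightarrow> real \<Rightarrow> real \<Rightarrow> (real\<Rightarrow>real) \<Rightarrow> (real\<Rightarrow>real) \<Rightarrow> (real\<Rightarrow>real) \<Rightarrow> bool" where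
  "good lo hi r K w z z' \<longleftrightarrow> (\<forall>x\<in>{lo..hi}. 0 < w x) \<and>
     (\<forall>x\<in>{lo..hi}. (w has_real_derivative z x) (at x within {lo..hi})) \<and>
     (\<forall>x\<in>{lo..hi}. (z has_real_derivative z' x) (at x within {lo..hi})) \<and>
     continuous_on {lo..hi} z' \<and> z lo = 0 \<and>
     (\<forall>x y. lo \<le> x \<longrightarrow> x \<le> y \<longrightarrow> y \<le> hi \<longrightarrow>
        integral {x..y} (\<lambda>s. w s powr (3*r-2) * (z' s)^2 + w s powr (3*r-4) * (z s)^4) \<le> K)"

lemma goodD:
  assumes "good lo hi r K w z z'"
  shows "\<And>x. x \<in> {lo..hi} \<Longrightarrow> 0 < w x"
    "\<And>x. x \<in> {lo..hi} \<Longrightarrow> (w has_real_derivative z x) (at x within {lo..hi})"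
    "\<And>x. x \<in> {lo..hi} \<Longrightarrow> (z has_real_derivative z' x) (at x within {lo..hi})"
    "continuous_on {lo..hi} z'" "z lo = 0"
    "\<And>x y. lo \<le> x \<Longrightarrow> x \<le> y \<Longrightarrow> y \<le> hi \<Longrightarrow>
        integral {x..y} (\<lambda>s. w s powr (3*r-2) * (z' s)^2 + w s powr (3*r-4) * (z s)^4) \<le> K"
  using assms unfolding good_def by auto

lemma equicont:
  fixes w z z' :: "nat \<Rightarrow> real \<Rightarrow> real"
  assumes r: "0 < r" "r < 1" and K: "0 \<le> K" and Mw0: "0 < Mw"
  and gd: "\<And>k. good lo hi r K (w k) (z k) (z' k)"
  and Mw: "\<And>k x. x \<in> {lo..hi} \<Longrightarrow> w k x \<le> Mw"
  and e: "0 < e"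
  shows "\<exists>d>0. \<forall>k x y. x \<in> {lo..hi} \<longrightarrow> y \<in> {lo..hi} \<longrightarrow> \<bar>x - y\<bar> < d \<longrightarrow> \<bar>z k x - z k y\<bar> < e"
proof -
  define c0 where "c0 = (5*K) powr (1/3)"
  have c0: "0 \<le> c0" unfolding c0_def by simp
  have zb: "\<bar>z k x\<bar> \<le> c0 * w k x powr (1-r)" if "x \<in> {lo..hi}" for k x
    unfolding c0_def using zbound[OF r K goodD(1-6)[OF gd[of k]] that] .
  have l0: "((\<lambda>s::real. s powr (1-r)) \<longlongrightarrow> 0) (at_right 0)"
  proof (rule tendsto_zero_powrI[where b="1-r"])
    show "((\<lambda>s::real. s) \<longlongrightarrow> 0) (at_right 0)" by (rule tendsto_ident_at)
    show "\<forall>\<^sub>F s in at_right (0::real). 0 \<le> s"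
      by (auto simp: eventually_at_right_field intro!: exI[of _ 1])
  qed (use r in auto)
  have lim: "((\<lambda>s. c0 * s powr (1-r)) \<longlongrightarrow> c0 * 0) (at_right 0)"
    by (intro tendsto_mult tendsto_const l0)
  have "\<forall>\<^sub>F s in at_right 0. c0 * s powr (1-r) < e/2"
    using order_tendstoD(2)[OF lim, of "e/2"] e by simp
  then obtain b where b: "b > 0" "\<And>s. 0 < s \<Longrightarrow> s < b \<Longrightarrow> c0 * s powr (1-r) < e/2"
    unfolding eventually_at_right_field by auto
  define \<eta> where "\<eta> = b/3"
  have \<eta>: "0 < \<eta>" using b by (simp add: \<eta>_def)
  define L where "L = c0 * Mw powr (1-r)"
  have L: "0 \<le> L" unfolding L_def using c0 by simp
  have lip: "\<bar>w k x - w k y\<bar> \<le> L * \<bar>x - y\<bar>" if "x \<in> {lo..hi}" "y \<in> {lo..hi}" for k x y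
  proof -
    have "norm (w k x - w k y) \<le> L * norm (x - y)"
    proof (rule field_differentiable_bound[OF convex_real_interval(5)])
      fix s assume s: "s \<in> {lo..hi}"
      show "(w k has_field_derivative z k s) (at s within {lo..hi})" using goodD(2)[OF gd s] .
      have "\<bar>z k s\<bar> \<le> c0 * w k s powr (1-r)" using zb[OF s] .
      also have "\<dots> \<le> c0 * Mw powr (1-r)"
        using goodD(1)[OF gd[of k] s] Mw[OF s, of k] r c0 by (intro mult_left_mono powr_mono2) auto
      finally show "norm (z k s) \<le> L" by (simp add: L_def)
    qed (use that in auto)
    then show ?thesis by simp
  qed
  define lam where "lam = e / (4*(K+1))"
  have lam: "0 < lam" using e K by (simp add: lam_def)
  define c where "c = (\<eta> powr (2-3*r) + Mw powr (2-3*r)) / (2*lam)"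
  have c: "0 \<le> c" unfolding c_def using lam by simp
  define d where "d = min (\<eta>/(L+1)) (e/(4*(c+1)))"
  have d: "0 < d" unfolding d_def using \<eta> L e c by simp
  have main: "\<bar>z k y - z k x\<bar> < e" if xy: "x \<in> {lo..hi}" "y \<in> {lo..hi}" "x \<le> y" "y - x < d" for k x y
  proof (cases "\<forall>s\<in>{x..y}. \<eta> \<le> w k s")
    case True
    have "\<bar>z k y - z k x\<bar> \<le> lam/2 * K + (y - x) * c"
      unfolding c_def
      by (rule core_modulus[OF r goodD(1-4)[OF gd[of k]] goodD(6)[OF gd[of k]] _ _ _ \<eta> lam])
         (use xy True Mw in auto)
    also have "lam/2 * K \<le> e/8"
    proof -
      have "lam/2 * K = e * K / (8*(K+1))" by (simp add: lam_def)
      also have "\<dots> \<le> e/8" using e K by (simp add: field_simps)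
      finally show ?thesis .
    qed
    also have "(y - x) * c < e/4"
    proof -
      have "(y - x) * c \<le> d * c" using xy c by (intro mult_right_mono) auto
      also have "\<dots> \<le> e/(4*(c+1)) * c" using c by (intro mult_right_mono) (auto simp: d_def)
      also have "\<dots> < e/4" using e c by (simp add: field_simps)
      finally show ?thesis .
    qed
    finally show ?thesis using e by simp
  next
    case False
    then obtain s where s: "s \<in> {x..y}" "w k s < \<eta>" by (auto simp: not_le)
    have sS: "s \<in> {lo..hi}" using s xy by auto
    have Ld: "L * d < \<eta>"
    proof -
      have "L * d \<le> L * (\<eta>/(L+1))" using L by (intro mult_left_mono) (auto simp: d_def)
      also have "\<dots> < \<eta>" using L \<eta> by (simp add: field_simps)
      finally show ?thesis .
    qed
    have near: "w k p < b" if p: "p \<in> {x..y}" for p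
    proof -
      have pS: "p \<in> {lo..hi}" using p xy by auto
      have "\<bar>p - s\<bar> \<le> d" using p s xy by auto
      then have "L * \<bar>p - s\<bar> \<le> L * d" using L by (intro mult_left_mono) auto
      then have "\<bar>w k p - w k s\<bar> < \<eta>" using lip[OF pS sS, of k] Ld by linarith
      then show ?thesis using s \<eta>_def by linarith
    qed
    have zx: "\<bar>z k x\<bar> < e/2"
      using zb[OF xy(1), of k] b(2)[OF goodD(1)[OF gd xy(1)] near[of x]] xy by auto
    have zy: "\<bar>z k y\<bar> < e/2"
      using zb[OF xy(2), of k] b(2)[OF goodD(1)[OF gd xy(2)] near[of y]] xy by auto
    show ?thesis using zx zy by linarith
  qed
  show ?thesis
  proof (intro exI[of _ d] conjI d allI impI)
    fix k x y assume xS: "x \<in> {lo..hi}" and yS: "y \<in> {lo..hi}" and xy: "\<bar>x - y\<bar> < d"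
    show "\<bar>z k x - z k y\<bar> < e"
    proof (cases "x \<le> y")
      case True then show ?thesis using main[OF xS yS True] xy by (simp add: abs_minus_commute)
    next
      case False then show ?thesis using main[OF yS xS] xy by (simp add: abs_minus_commute)
    qed
  qed
qed

lemma seq_C1:
  fixes w z z' :: "nat \<Rightarrow> real \<Rightarrow> real" and W :: "real \<Rightarrow> real"
  assumes lohi: "lo < hi" and r: "0 < r" "r < 1" and K: "0 \<le> K" and Mw0: "0 < Mw"
  and gd: "\<And>k. good lo hi r K (w k) (z k) (z' k)"
  and Mw: "\<And>k x. x \<in> {lo..hi} \<Longrightarrow> w k x \<le> Mw"
  and conv: "\<And>e. 0 < e \<Longrightarrow> \<forall>\<^sub>F k in sequentially. \<forall>x\<in>{lo..hi}. \<bar>w k x - W x\<bar> < e"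
  shows "\<exists>g. continuous_on {lo..hi} g \<and> (\<forall>x\<in>{lo..hi}. (W has_real_derivative g x) (at x within {lo..hi}))"
proof -
  define S where "S = {lo..hi}"
  have cauchy: "\<exists>N. \<forall>m n x. N \<le> m \<and> N \<le> n \<and> x \<in> S \<longrightarrow> dist (z m x) (z n x) < e" if e: "0 < e" for e
  proof -
    obtain d where d: "0 < d" and dd: "\<And>k x y. x \<in> {lo..hi} \<Longrightarrow> y \<in> {lo..hi} \<Longrightarrow> \<bar>x - y\<bar> < d \<Longrightarrow> \<bar>z k x - z k y\<bar> < e/4"
      using equicont[where w=w and z=z and z'=z' and e="e/4", OF r K Mw0 gd Mw] e by auto
    define h where "h = min (d/2) ((hi-lo)/2)"
    have h: "0 < h" "h < d" "h \<le> (hi-lo)/2" using d lohi unfolding h_def by (auto simp: min_def)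
    have "\<forall>\<^sub>F k in sequentially. \<forall>x\<in>{lo..hi}. \<bar>w k x - W x\<bar> < e*h/8"
      using conv[of "e*h/8"] e h by simp
    then obtain N where N: "\<And>k x. N \<le> k \<Longrightarrow> x \<in> {lo..hi} \<Longrightarrow> \<bar>w k x - W x\<bar> < e*h/8"
      unfolding eventually_sequentially by (metis atLeastAtMost_iff)
    show ?thesis
    proof (intro exI[of _ N] allI impI, elim conjE)
      fix m n x assume m: "N \<le> m" and n: "N \<le> n" and x: "x \<in> S"
      define x' where "x' = (if x + h \<le> hi then x + h else x - h)"
      have x'S: "x' \<in> {lo..hi}" using x h unfolding x'_def S_def by auto
      have xS: "x \<in> {lo..hi}" using x S_def by simp
      have hx: "\<bar>x' - x\<bar> = h" using h unfolding x'_def by auto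
      define T where "T = {min x x'..max x x'}"
      have TS: "T \<subseteq> {lo..hi}" using xS x'S unfolding T_def by auto
      have dq: "\<bar>w k x' - w k x - z k x * (x' - x)\<bar> \<le> e/4 * h" for k
      proof -
        have "norm ((\<lambda>s. w k s - z k x * s) x' - (\<lambda>s. w k s - z k x * s) x) \<le> e/4 * norm (x' - x)"
        proof (rule field_differentiable_bound[of T _ "\<lambda>s. z k s - z k x"])
          show "convex T" unfolding T_def by (rule convex_real_interval)
          fix s assume s: "s \<in> T"
          have sS: "s \<in> {lo..hi}" using s TS by auto
          have "(w k has_real_derivative z k s) (at s within T)"
            using DERIV_subset[OF goodD(2)[OF gd sS] TS] .
          then show "((\<lambda>s. w k s - z k x * s) has_real_derivative z k s - z k x) (at s within T)"
            by (auto intro!: derivative_eq_intros)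
          have "\<bar>s - x\<bar> \<le> h" using s hx unfolding T_def by auto
          then show "norm (z k s - z k x) \<le> e/4" using dd[OF sS xS, of k] h by auto
        qed (auto simp: T_def)
        then show ?thesis using hx by (simp add: algebra_simps)
      qed
      have wm: "\<bar>w m p - w n p\<bar> < e*h/4" if "p \<in> {lo..hi}" for p
        using N[OF m that] N[OF n that] unfolding abs_less_iff by linarith
      have eq: "(z m x - z n x) * (x' - x) =
          (w m x' - w n x') - (w m x - w n x) - (w m x' - w m x - z m x * (x' - x)) + (w n x' - w n x - z n x * (x' - x))"
        by (simp add: algebra_simps)
      have "\<bar>(z m x - z n x) * (x' - x)\<bar> < e * h"
        using wm[OF x'S] wm[OF xS] dq[of m] dq[of n] unfolding eq abs_less_iff abs_le_iff
        by linarith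
      then have "\<bar>z m x - z n x\<bar> * h < e * h" using hx by (simp add: abs_mult)
      then show "dist (z m x) (z n x) < e" using h by (simp add: dist_real_def)
    qed
  qed
  then obtain g where g: "\<And>e. 0 < e \<Longrightarrow> \<exists>N. \<forall>n x. N \<le> n \<and> x \<in> S \<longrightarrow> dist (z n x) (g x) < e"
    using uniformly_convergent_eq_cauchy[of "\<lambda>x. x \<in> S" z] by blast
  have ulim: "\<forall>\<^sub>F n in sequentially. \<forall>x\<in>S. dist (z n x) (g x) < e" if "0 < e" for e
    using g[OF that] unfolding eventually_sequentially by blast
  have cg: "continuous_on S g"
  proof (rule uniform_limit_theorem[where f=z and l=g and F=sequentially])
    show "\<forall>\<^sub>F n in sequentially. continuous_on S (z n)"
      unfolding S_def using goodD(3)[OF gd]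
      by (intro always_eventually allI) (meson DERIV_continuous continuous_on_eq_continuous_within)
    show "uniform_limit S z g sequentially"
      unfolding uniform_limit_iff using ulim by blast
  qed simp
  have "\<exists>G. \<forall>x\<in>S. (\<lambda>n. w n x) \<longlonglongrightarrow> G x \<and> (G has_derivative (\<lambda>h. g x * h)) (at x within S)"
  proof (rule has_derivative_sequence[of S w "\<lambda>n x h. z n x * h" "\<lambda>x h. g x * h" lo "W lo"])
    show "convex S" unfolding S_def by (rule convex_real_interval)
    show "\<And>n x. x \<in> S \<Longrightarrow> (w n has_derivative (\<lambda>h. z n x * h)) (at x within S)"
      unfolding S_def using goodD(2)[OF gd] by (simp add: has_field_derivative_def)
    show "\<forall>\<^sub>F n in sequentially. \<forall>x\<in>S. \<forall>h. norm (z n x * h - g x * h) \<le> e * norm h" if "0 < e" for e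
      using ulim[OF that]
    proof eventually_elim
      case (elim n)
      show ?case
      proof (intro ballI allI)
        fix x h assume "x \<in> S"
        then have "\<bar>z n x - g x\<bar> \<le> e" using elim by (auto simp: dist_real_def intro: less_imp_le)
        then show "norm (z n x * h - g x * h) \<le> e * norm h"
          by (simp add: abs_mult left_diff_distrib[symmetric] mult_right_mono)
      qed
    qed
    show "lo \<in> S" unfolding S_def using lohi by simp
    show "(\<lambda>n. w n lo) \<longlonglongrightarrow> W lo"
      unfolding tendsto_iff dist_real_def
      using conv lohi by (force elim!: eventually_mono)
  qed
  then obtain G where G: "\<And>x. x \<in> S \<Longrightarrow> (\<lambda>n. w n x) \<longlonglongrightarrow> G x"
    "\<And>x. x \<in> S \<Longrightarrow> (G has_derivative (\<lambda>h. g x * h)) (at x within S)" by blast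
  have WG: "W x = G x" if "x \<in> S" for x
  proof (rule LIMSEQ_unique[OF _ G(1)[OF that]])
    show "(\<lambda>n. w n x) \<longlonglongrightarrow> W x"
      unfolding tendsto_iff dist_real_def
      using conv that unfolding S_def by (force elim!: eventually_mono)
  qed
  show ?thesis
  proof (intro exI[of _ g] conjI ballI)
    show "continuous_on {lo..hi} g" using cg S_def by simp
    fix x assume x: "x \<in> {lo..hi}"
    have "(W has_derivative (\<lambda>h. g x * h)) (at x within S)"
      by (rule has_derivative_transform[OF _ _ G(2)]) (use x WG S_def in auto)
    then show "(W has_real_derivative g x) (at x within {lo..hi})"
      unfolding S_def has_field_derivative_def by simp
  qed
qed

lemma powr_C1:
  fixes W g :: "real \<Rightarrow> real"
  assumes W0: "\<And>x. x \<in> {lo..hi} \<Longrightarrow> 0 \<le> W x"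
  and dW: "\<And>x. x \<in> {lo..hi} \<Longrightarrow> (W has_real_derivative g x) (at x within {lo..hi})"
  and cg: "continuous_on {lo..hi} g" and p: "1 \<le> p"
  shows "C1_on_interval lo hi (\<lambda>x. W x powr p)"
proof (cases "p = 1")
  case True
  show ?thesis unfolding C1_on_interval_def
  proof (intro exI[of _ g] conjI cg ballI)
    fix x assume x: "x \<in> {lo..hi}"
    show "((\<lambda>x. W x powr p) has_real_derivative g x) (at x within {lo..hi})"
      unfolding has_field_derivative_def
      by (rule has_derivative_transform[OF x _ dW[OF x, unfolded has_field_derivative_def]])
         (use True W0 in auto)
  qed
next
  case False
  then have p1: "1 < p" using p by simp
  define S where "S = {lo..hi}"
  have cW: "continuous_on S W" unfolding S_def
    using dW by (meson DERIV_continuous continuous_on_eq_continuous_within)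
  define D where "D x = p * W x powr (p - 1) * g x" for x
  have cD: "continuous_on S D" unfolding D_def
    using W0 p1 cW cg unfolding S_def
    by (intro continuous_intros continuous_on_powr') auto
  show ?thesis unfolding C1_on_interval_def
  proof (intro exI[of _ D] conjI ballI)
    show "continuous_on {lo..hi} D" using cD S_def by simp
    fix x assume x: "x \<in> {lo..hi}"
    show "((\<lambda>x. W x powr p) has_real_derivative D x) (at x within {lo..hi})"
    proof (cases "W x = 0")
      case False
      then have "0 < W x" using W0[OF x] by simp
      then show ?thesis unfolding D_def
        using DERIV_chain2[OF has_real_derivative_powr dW[OF x]] by simp
    next
      case True
      have q: "((\<lambda>y. (W y - W x) / (y - x)) \<longlongrightarrow> g x) (at x within {lo..hi})"
        using dW[OF x] by (simp add: has_field_derivative_iff)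
      have cx: "(W \<longlongrightarrow> W x) (at x within {lo..hi})"
        using DERIV_continuous[OF dW[OF x]] by (simp add: continuous_within)
      have pw: "((\<lambda>y. W y powr (p - 1)) \<longlongrightarrow> W x powr (p - 1)) (at x within {lo..hi})"
        using p1 by (intro tendsto_powr'[OF cx tendsto_const])
           (auto simp: eventually_at_filter W0 intro!: always_eventually)
      have "((\<lambda>y. (W y - W x) / (y - x) * W y powr (p - 1)) \<longlongrightarrow> g x * W x powr (p - 1)) (at x within {lo..hi})"
        by (rule tendsto_mult[OF q pw])
      then have lim: "((\<lambda>y. (W y - W x) / (y - x) * W y powr (p - 1)) \<longlongrightarrow> D x) (at x within {lo..hi})"
        using True p1 by (simp add: D_def)
      have ev: "\<forall>\<^sub>F y in at x within {lo..hi}. (W y - W x) / (y - x) * W y powr (p - 1) = (W y powr p - W x powr p) / (y - x)"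
      proof -
        have "(W y - W x) / (y - x) * W y powr (p - 1) = (W y powr p - W x powr p) / (y - x)"
          if "y \<in> {lo..hi}" for y
        proof -
          have "W y * W y powr (p - 1) = W y powr (1 + (p - 1))" by (rule powr_mult_base[OF W0[OF that]])
          then show ?thesis using True p1 by simp
        qed
        then show ?thesis by (auto simp: eventually_at_filter intro!: always_eventually)
      qed
      show ?thesis unfolding has_field_derivative_iff
        using tendsto_cong[OF ev] lim by simp
    qed
  qed
qed



lemma intbound:
  fixes \<Phi> \<Psi> :: "real \<Rightarrow> real" and a K x y :: real
  assumes cPhi: "continuous_on {-a..a} \<Phi>"
  and nonneg: "\<And>s. s \<in> {-a..a} \<Longrightarrow> 0 \<le> \<Phi> s"
  and le: "\<And>s. s \<in> {-a<..<a} \<Longrightarrow> \<Phi> s \<le> \<Psi> s"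
  and bound: "(\<integral>\<^sup>+ s. ennreal (indicator {-a<..<a} s * \<Psi> s) \<partial>lborel) \<le> ennreal K"
  and K: "0 \<le> K"
  and xy: "-a \<le> x" "x \<le> y" "y \<le> a"
  shows "integral {x..y} \<Phi> \<le> K"
proof -
  define f where "f s = indicator {x..y} s * \<Phi> s" for s
  have sub: "{x..y} \<subseteq> {-a..a}" using xy by auto
  have cPhi': "continuous_on {x..y} \<Phi>" using continuous_on_subset[OF cPhi sub] .
  have fm: "f \<in> borel_measurable borel"
    unfolding f_def using borel_measurable_continuous_on_indicator[OF _ cPhi'] by simp
  have f0: "0 \<le> f s" for s
    by (cases "s \<in> {x..y}") (use nonneg sub in \<open>auto simp: f_def\<close>)
  have "(\<Phi> has_integral integral {x..y} \<Phi>) {x..y}"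
    using integrable_continuous_interval[OF cPhi'] by (simp add: has_integral_integral)
  then have "((\<lambda>s. if s \<in> {x..y} then \<Phi> s else 0) has_integral integral {x..y} \<Phi>) UNIV"
    by (rule has_integral_restrict_UNIV[THEN iffD2])
  moreover have "f = (\<lambda>s. if s \<in> {x..y} then \<Phi> s else 0)" by (auto simp: f_def indicator_def fun_eq_iff)
  ultimately have fI: "(f has_integral integral {x..y} \<Phi>) UNIV" by simp
  have I0: "0 \<le> integral {x..y} \<Phi>"
    using integral_nonneg[OF integrable_continuous_interval[OF cPhi']] nonneg sub by auto
  have "ennreal (integral {x..y} \<Phi>) = (\<integral>\<^sup>+ s. ennreal (f s) \<partial>lborel)"
    using nn_integral_has_integral_lborel[OF fm f0 fI] by simp
  also have "\<dots> \<le> (\<integral>\<^sup>+ s. ennreal (indicator {-a<..<a} s * \<Psi> s) \<partial>lborel)"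
  proof (rule nn_integral_mono_AE)
    show "AE s in lborel. ennreal (f s) \<le> ennreal (indicator {-a<..<a} s * \<Psi> s)"
      using AE_lborel_singleton[of a] AE_lborel_singleton[of "-a"]
    proof eventually_elim
      case (elim s)
      show ?case
      proof (cases "s \<in> {x..y}")
        case sin: True
        then have "s \<in> {-a<..<a}" using elim sub by auto
        then show ?thesis using le[of s] sin by (auto simp: f_def intro!: ennreal_leI)
      next
        case False then show ?thesis by (simp add: f_def)
      qed
    qed
  qed
  also have "\<dots> \<le> ennreal K" by (rule bound)
  finally show ?thesis using K by (simp add: ennreal_le_iff)
qed

lemma liminf_fin:
  fixes X :: "nat \<Rightarrow> ennreal"
  assumes "liminf X \<noteq> \<infinity>"
  shows "\<exists>K\<ge>0. \<exists>\<^sub>F k in sequentially. X k \<le> ennreal K"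
proof -
  define K where "K = enn2real (liminf X) + 1"
  have K: "0 \<le> K" unfolding K_def by simp
  have "liminf X = ennreal (enn2real (liminf X))" using assms by (simp add: ennreal_enn2real_if)
  also have "\<dots> < ennreal K"
  proof (rule ennreal_lessI)
    have "0 \<le> enn2real (liminf X)" by (rule enn2real_nonneg)
    then show "0 < K" "enn2real (liminf X) < K" unfolding K_def by linarith+
  qed
  finally have "\<not> ennreal K \<le> liminf X" by (simp add: not_le)
  then obtain y where y: "y < ennreal K" "\<not> eventually (\<lambda>k. y < X k) sequentially"
    unfolding le_Liminf_iff by auto
  then have "\<exists>\<^sub>F k in sequentially. X k \<le> y" by (simp add: not_eventually not_less)
  then have "\<exists>\<^sub>F k in sequentially. X k \<le> ennreal K"
    by (rule frequently_elim1) (use y in auto)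
  then show ?thesis using K by blast
qed

definition zzf :: "real \<Rightarrow> (real \<Rightarrow> real \<Rightarrow> real) \<Rightarrow> (real \<Rightarrow> real \<Rightarrow> real) \<Rightarrow> real \<Rightarrow> real \<Rightarrow> real" where
  "zzf \<gamma> V V1 x t = \<gamma> * V x t powr (\<gamma> - 1) * V1 x t"

definition zpf :: "real \<Rightarrow> (real \<Rightarrow> real \<Rightarrow> real) \<Rightarrow> (real \<Rightarrow> real \<Rightarrow> real) \<Rightarrow> (real \<Rightarrow> real \<Rightarrow> real) \<Rightarrow> real \<Rightarrow> real \<Rightarrow> real" where
  "zpf \<gamma> V V1 V2 x t = \<gamma> * (\<gamma> - 1) * V x t powr (\<gamma> - 2) * (V1 x t)^2 + \<gamma> * V x t powr (\<gamma> - 1) * V2 x t"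

lemma dzz:
  fixes Va Vb Vc :: "real \<Rightarrow> real \<Rightarrow> real"
  assumes pos: "0 < Va x t"
  and dV: "((\<lambda>y. Va y t) has_real_derivative Vb x t) (at x within S)"
  and dV1: "((\<lambda>y. Vb y t) has_real_derivative Vc x t) (at x within S)"
  shows "((\<lambda>y. Va y t powr \<gamma>) has_real_derivative zzf \<gamma> Va Vb x t) (at x within S)"
    "((\<lambda>y. zzf \<gamma> Va Vb y t) has_real_derivative zpf \<gamma> Va Vb Vc x t) (at x within S)"
proof -
  show "((\<lambda>y. Va y t powr \<gamma>) has_real_derivative zzf \<gamma> Va Vb x t) (at x within S)"
    using DERIV_chain2[OF has_real_derivative_powr[OF pos] dV] by (simp add: zzf_def)
  have dp: "((\<lambda>y. Va y t powr (\<gamma> - 1)) has_real_derivative (\<gamma> - 1) * Va x t powr (\<gamma> - 2) * Vb x t) (at x within S)"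
    using DERIV_chain2[OF has_real_derivative_powr[OF pos, of "\<gamma> - 1"] dV] by (simp add: algebra_simps)
  have "((\<lambda>y. \<gamma> * Va y t powr (\<gamma> - 1) * Vb y t) has_real_derivative
      \<gamma> * ((\<gamma> - 1) * Va x t powr (\<gamma> - 2) * Vb x t) * Vb x t + Vc x t * (\<gamma> * Va x t powr (\<gamma> - 1))) (at x within S)"
    by (rule DERIV_mult[OF DERIV_cmult[OF dp] dV1])
  then show "((\<lambda>y. zzf \<gamma> Va Vb y t) has_real_derivative zpf \<gamma> Va Vb Vc x t) (at x within S)"
    unfolding zzf_def zpf_def by (simp add: algebra_simps power2_eq_square)
qed

lemma deriv_facts:
  fixes Va Vb Vc :: "real \<Rightarrow> real \<Rightarrow> real" and a t x :: real
  assumes pos: "\<And>x. x \<in> {-a..a} \<Longrightarrow> 0 < Va x t"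
  and dV: "\<And>x. x \<in> {-a..a} \<Longrightarrow> ((\<lambda>y. Va y t) has_real_derivative Vb x t) (at x within {-a..a})"
  and dV1: "\<And>x. x \<in> {-a..a} \<Longrightarrow> ((\<lambda>y. Vb y t) has_real_derivative Vc x t) (at x within {-a..a})"
  and x: "x \<in> {-a<..<a}"
  shows "deriv (\<lambda>y. Va y t) x = Vb x t"
    "deriv (\<lambda>y. deriv (\<lambda>z. Va z t powr \<gamma>) y) x = zpf \<gamma> Va Vb Vc x t"
proof -
  have at: "at y within {-a..a} = at y" if "y \<in> {-a<..<a}" for y
    by (rule at_within_interior) (use that in simp)
  have xx: "x \<in> {-a..a}" using x by auto
  show "deriv (\<lambda>y. Va y t) x = Vb x t"
    using dV[OF xx] at[OF x] by (simp add: DERIV_imp_deriv)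
  have dw: "deriv (\<lambda>z. Va z t powr \<gamma>) y = zzf \<gamma> Va Vb y t" if "y \<in> {-a<..<a}" for y
  proof -
    have yy: "y \<in> {-a..a}" using that by auto
    show ?thesis using dzz(1)[where Va=Va and Vb=Vb and Vc=Vc and x=y and t=t and \<gamma>=\<gamma>, OF pos[OF yy] dV[OF yy] dV1[OF yy]] at[OF that]
      by (simp add: DERIV_imp_deriv)
  qed
  have "((\<lambda>y. zzf \<gamma> Va Vb y t) has_real_derivative zpf \<gamma> Va Vb Vc x t) (at x)"
    using dzz(2)[where Va=Va and Vb=Vb and Vc=Vc and x=x and t=t and \<gamma>=\<gamma>, OF pos[OF xx] dV[OF xx] dV1[OF xx]] at[OF x] by simp
  then have "((\<lambda>y. deriv (\<lambda>z. Va z t powr \<gamma>) y) has_real_derivative zpf \<gamma> Va Vb Vc x t) (at x)"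
    by (rule has_field_derivative_transform_within_open[OF _ open_greaterThanLessThan x]) (simp add: dw)
  then show "deriv (\<lambda>y. deriv (\<lambda>z. Va z t powr \<gamma>) y) x = zpf \<gamma> Va Vb Vc x t"
    by (simp add: DERIV_imp_deriv)
qed

definition G1f :: "real \<Rightarrow> real \<Rightarrow> (real \<Rightarrow> real \<Rightarrow> real) \<Rightarrow> (real \<Rightarrow> real \<Rightarrow> real) \<Rightarrow> (real \<Rightarrow> real \<Rightarrow> real) \<Rightarrow> real \<Rightarrow> real \<Rightarrow> real" where
  "G1f e1 \<gamma> V V1 V2 x t = V x t powr e1 * (zpf \<gamma> V V1 V2 x t)^2"

definition G2f :: "real \<Rightarrow> (real \<Rightarrow> real \<Rightarrow> real) \<Rightarrow> (real \<Rightarrow> real \<Rightarrow> real) \<Rightarrow> real \<Rightarrow> real \<Rightarrow> real" where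
  "G2f e2 V V1 x t = V x t powr e2 * (V1 x t)^4"

lemma borel_lborel_pair:
  fixes f :: "real \<times> real \<Rightarrow> real"
  assumes "f \<in> borel_measurable borel"
  shows "(\<lambda>p. ennreal (f p)) \<in> borel_measurable (lborel \<Otimes>\<^sub>M lborel)"
proof -
  have "f \<in> borel_measurable lborel"
    using assms measurable_cong_sets[OF sets_lborel refl] by blast
  then show ?thesis unfolding lborel_prod by simp
qed

lemma stepA:
  fixes U U1 U2 :: "nat \<Rightarrow> real \<Rightarrow> real \<Rightarrow> real" and a T e1 e2 \<gamma> ca cb :: real
  assumes a: "0 < a" and T: "0 < T" and c: "0 \<le> ca" "0 \<le> cb"
  and pos: "\<And>k x t. x \<in> {-a..a} \<Longrightarrow> 0 < t \<Longrightarrow> 0 < U k x t"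
  and cU: "\<And>k. continuous_on ({-a..a} \<times> {0<..}) (\<lambda>p. U k (fst p) (snd p))"
  and cU1: "\<And>k. continuous_on ({-a..a} \<times> {0<..}) (\<lambda>p. U1 k (fst p) (snd p))"
  and cU2: "\<And>k. continuous_on ({-a..a} \<times> {0<..}) (\<lambda>p. U2 k (fst p) (snd p))"
  and d1: "\<And>k x t. x \<in> {-a..a} \<Longrightarrow> 0 < t \<Longrightarrow> ((\<lambda>y. U k y t) has_real_derivative U1 k x t) (at x within {-a..a})"
  and d2: "\<And>k x t. x \<in> {-a..a} \<Longrightarrow> 0 < t \<Longrightarrow> ((\<lambda>y. U1 k y t) has_real_derivative U2 k x t) (at x within {-a..a})"
  and bnd1: "\<And>k. QT_nn_integral a T (\<lambda>x t. U k x t powr e1 * (deriv (\<lambda>y. deriv (\<lambda>z. U k z t powr \<gamma>) y) x)\<^sup>2) \<le> ennreal ca"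
  and bnd2: "\<And>k. QT_nn_integral a T (\<lambda>x t. U k x t powr e2 * (deriv (\<lambda>y. U k y t) x) ^ 4) \<le> ennreal cb"
  shows "AE t in lborel. t \<in> {0<..<T} \<longrightarrow> (\<exists>K\<ge>0. \<exists>\<^sub>F k in sequentially.
     (\<integral>\<^sup>+ x. ennreal (indicator {-a<..<a} x * (G1f e1 \<gamma> (U k) (U1 k) (U2 k) x t + G2f e2 (U k) (U1 k) x t)) \<partial>lborel) \<le> ennreal K)"
proof -
  define QT where "QT = {-a<..<a} \<times> {0<..<T}"
  have oQT: "open QT" unfolding QT_def by (intro open_Times) auto
  have QTsub: "QT \<subseteq> {-a..a} \<times> {0<..}" unfolding QT_def by auto
  define g1 where "g1 k p = G1f e1 \<gamma> (U k) (U1 k) (U2 k) (fst p) (snd p)" for k p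
  define g2 where "g2 k p = G2f e2 (U k) (U1 k) (fst p) (snd p)" for k p
  have posQ: "0 < U k (fst p) (snd p)" if "p \<in> QT" for k p
    using that pos unfolding QT_def by (auto simp: mem_Times_iff)
  have posQ': "U k x t \<noteq> 0" if "(x, t) \<in> QT" for k x t
    using posQ[OF that, of k] by simp
  have cg1: "continuous_on QT (g1 k)" for k
    unfolding g1_def G1f_def zpf_def using posQ
    by (intro continuous_intros continuous_on_subset[OF cU QTsub] continuous_on_subset[OF cU1 QTsub]
        continuous_on_subset[OF cU2 QTsub]) (auto dest: posQ')
  have cg2: "continuous_on QT (g2 k)" for k
    unfolding g2_def G2f_def using posQ
    by (intro continuous_intros continuous_on_subset[OF cU QTsub] continuous_on_subset[OF cU1 QTsub]) (auto dest: posQ')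
  have g1nn: "0 \<le> g1 k p" for k p unfolding g1_def G1f_def by simp
  have g2nn: "0 \<le> g2 k p" if "p \<in> QT" for k p
    unfolding g2_def G2f_def by (simp add: zero_le_even_power)
  have QTb: "QT \<in> sets borel" using oQT by simp
  have m1: "(\<lambda>p. ennreal (indicator QT p * g1 k p)) \<in> borel_measurable (lborel \<Otimes>\<^sub>M lborel)" for k
    using borel_lborel_pair[OF borel_measurable_continuous_on_indicator[OF QTb cg1]] by simp
  have m2: "(\<lambda>p. ennreal (indicator QT p * g2 k p)) \<in> borel_measurable (lborel \<Otimes>\<^sub>M lborel)" for k
    using borel_lborel_pair[OF borel_measurable_continuous_on_indicator[OF QTb cg2]] by simp
  define H where "H k p = ennreal (indicator QT p * g1 k p) + ennreal (indicator QT p * g2 k p)" for k p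
  have mH: "H k \<in> borel_measurable (lborel \<Otimes>\<^sub>M lborel)" for k
    unfolding H_def using m1 m2 by measurable
  have i1: "(\<integral>\<^sup>+ p. ennreal (indicator QT p * g1 k p) \<partial>(lborel \<Otimes>\<^sub>M lborel)) \<le> ennreal ca" for k
  proof -
    have "(\<integral>\<^sup>+ p. ennreal (indicator QT p * g1 k p) \<partial>(lborel \<Otimes>\<^sub>M lborel)) =
        QT_nn_integral a T (\<lambda>x t. U k x t powr e1 * (deriv (\<lambda>y. deriv (\<lambda>z. U k z t powr \<gamma>) y) x)\<^sup>2)"
      unfolding QT_nn_integral_def lborel_prod QT_def[symmetric]
    proof (intro nn_integral_cong)
      fix p :: "real \<times> real"
      show "ennreal (indicator QT p * g1 k p) =
        ennreal (indicator QT p * (U k (fst p) (snd p) powr e1 * (deriv (\<lambda>y. deriv (\<lambda>z. U k z (snd p) powr \<gamma>) y) (fst p))\<^sup>2))"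
      proof (cases "p \<in> QT")
        case True
        then have x: "fst p \<in> {-a<..<a}" and t: "0 < snd p" unfolding QT_def by (auto simp: mem_Times_iff)
        have "deriv (\<lambda>y. deriv (\<lambda>z. U k z (snd p) powr \<gamma>) y) (fst p) = zpf \<gamma> (U k) (U1 k) (U2 k) (fst p) (snd p)"
          by (rule deriv_facts(2)[where Va="U k" and Vb="U1 k" and Vc="U2 k", OF pos[OF _ t] d1[OF _ t] d2[OF _ t] x])
        then show ?thesis by (simp add: g1_def G1f_def)
      qed simp
    qed
    then show ?thesis using bnd1[of k] by simp
  qed
  have i2: "(\<integral>\<^sup>+ p. ennreal (indicator QT p * g2 k p) \<partial>(lborel \<Otimes>\<^sub>M lborel)) \<le> ennreal cb" for k
  proof -
    have "(\<integral>\<^sup>+ p. ennreal (indicator QT p * g2 k p) \<partial>(lborel \<Otimes>\<^sub>M lborel)) =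
        QT_nn_integral a T (\<lambda>x t. U k x t powr e2 * (deriv (\<lambda>y. U k y t) x) ^ 4)"
      unfolding QT_nn_integral_def lborel_prod QT_def[symmetric]
    proof (intro nn_integral_cong)
      fix p :: "real \<times> real"
      show "ennreal (indicator QT p * g2 k p) =
        ennreal (indicator QT p * (U k (fst p) (snd p) powr e2 * (deriv (\<lambda>y. U k y (snd p)) (fst p)) ^ 4))"
      proof (cases "p \<in> QT")
        case True
        then have x: "fst p \<in> {-a<..<a}" and t: "0 < snd p" unfolding QT_def by (auto simp: mem_Times_iff)
        have "deriv (\<lambda>y. U k y (snd p)) (fst p) = U1 k (fst p) (snd p)"
          by (rule deriv_facts(1)[where Va="U k" and Vb="U1 k" and Vc="U2 k", OF pos[OF _ t] d1[OF _ t] d2[OF _ t] x])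
        then show ?thesis by (simp add: g2_def G2f_def)
      qed simp
    qed
    then show ?thesis using bnd2[of k] by simp
  qed
  have iH: "(\<integral>\<^sup>+ p. H k p \<partial>(lborel \<Otimes>\<^sub>M lborel)) \<le> ennreal (ca + cb)" for k
  proof -
    have "(\<integral>\<^sup>+ p. H k p \<partial>(lborel \<Otimes>\<^sub>M lborel)) =
       (\<integral>\<^sup>+ p. ennreal (indicator QT p * g1 k p) \<partial>(lborel \<Otimes>\<^sub>M lborel)) +
       (\<integral>\<^sup>+ p. ennreal (indicator QT p * g2 k p) \<partial>(lborel \<Otimes>\<^sub>M lborel))"
      unfolding H_def by (rule nn_integral_add[OF m1 m2])
    also have "\<dots> \<le> ennreal ca + ennreal cb" by (intro add_mono i1 i2)
    also have "\<dots> = ennreal (ca + cb)" using c by (simp add: ennreal_plus)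
    finally show ?thesis .
  qed
  define h where "h k t = (\<integral>\<^sup>+ x. H k (x, t) \<partial>lborel)" for k t
  have mh: "h k \<in> borel_measurable lborel" for k
    using lborel.borel_measurable_nn_integral_fst[OF measurable_pair_swap[OF mH[of k]]]
    unfolding h_def by simp
  have tonelli: "(\<integral>\<^sup>+ t. h k t \<partial>lborel) = (\<integral>\<^sup>+ p. H k p \<partial>(lborel \<Otimes>\<^sub>M lborel))" for k
    unfolding h_def by (rule lborel_pair.nn_integral_snd[OF mH])
  have "(\<integral>\<^sup>+ t. liminf (\<lambda>k. h k t) \<partial>lborel) \<le> liminf (\<lambda>k. \<integral>\<^sup>+ t. h k t \<partial>lborel)"
    by (rule nn_integral_liminf[OF mh])
  also have "\<dots> \<le> ennreal (ca + cb)"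
    by (rule Liminf_le) (auto simp: tonelli iH)
  finally have fin: "(\<integral>\<^sup>+ t. liminf (\<lambda>k. h k t) \<partial>lborel) \<noteq> \<infinity>"
    by (auto simp: top_unique)
  have "AE t in lborel. liminf (\<lambda>k. h k t) \<noteq> \<infinity>"
    by (rule nn_integral_PInf_AE[OF borel_measurable_liminf[OF mh] fin])
  then show ?thesis
  proof eventually_elim
    case (elim t)
    show ?case
    proof
      assume t: "t \<in> {0<..<T}"
      obtain K where K: "K \<ge> 0" "\<exists>\<^sub>F k in sequentially. h k t \<le> ennreal K"
        using liminf_fin[OF elim] by blast
      have "h k t = (\<integral>\<^sup>+ x. ennreal (indicator {-a<..<a} x * (G1f e1 \<gamma> (U k) (U1 k) (U2 k) x t + G2f e2 (U k) (U1 k) x t)) \<partial>lborel)" for k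
        unfolding h_def
      proof (intro nn_integral_cong)
        fix x
        show "H k (x, t) = ennreal (indicator {-a<..<a} x * (G1f e1 \<gamma> (U k) (U1 k) (U2 k) x t + G2f e2 (U k) (U1 k) x t))"
        proof (cases "x \<in> {-a<..<a}")
          case True
          then have inQ: "(x, t) \<in> QT" using t unfolding QT_def by auto
          have "0 \<le> g2 k (x, t)" by (rule g2nn[OF inQ])
          then show ?thesis unfolding H_def using inQ True g1nn[of k "(x,t)"]
            by (simp add: g1_def g2_def ennreal_plus)
        next
          case False
          then have "(x, t) \<notin> QT" unfolding QT_def by auto
          then show ?thesis unfolding H_def using False by simp
        qed
      qed
      then show "\<exists>K\<ge>0. \<exists>\<^sub>F k in sequentially. (\<integral>\<^sup>+ x. ennreal (indicator {-a<..<a} x * (G1f e1 \<gamma> (U k) (U1 k) (U2 k) x t + G2f e2 (U k) (U1 k) x t)) \<partial>lborel) \<le> ennreal K"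
        using K by auto
    qed
  qed
qed

lemma powr_subadd:
  fixes y d g :: real
  assumes "0 \<le> y" "0 \<le> d" "0 < g" "g \<le> 1"
  shows "(y + d) powr g \<le> y powr g + d powr g"
proof (cases "y + d = 0")
  case True then show ?thesis by simp
next
  case False
  then have s: "0 < y + d" using assms by simp
  have key: "c * (y + d) powr (g - 1) \<le> c powr g" if c: "0 \<le> c" "c \<le> y + d" for c
  proof (cases "c = 0")
    case True then show ?thesis by simp
  next
    case False
    then have c0: "0 < c" using c by simp
    have "(y + d) powr (g - 1) \<le> c powr (g - 1)"
      by (rule powr_mono2') (use assms c0 c in auto)
    then have "c * (y + d) powr (g - 1) \<le> c * c powr (g - 1)" using c0 by simp
    also have "\<dots> = c powr g" using c0 by (simp add: powr_mult_base)
    finally show ?thesis .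
  qed
  have "(y + d) powr g = (y + d) * (y + d) powr (g - 1)"
    using s by (simp add: powr_mult_base)
  also have "\<dots> = y * (y + d) powr (g - 1) + d * (y + d) powr (g - 1)" by (simp add: algebra_simps)
  also have "\<dots> \<le> y powr g + d powr g"
    using key[of y] key[of d] assms by (intro add_mono) auto
  finally show ?thesis .
qed

lemma powr_diff:
  fixes x y g :: real
  assumes "0 \<le> x" "0 \<le> y" "0 < g" "g \<le> 1"
  shows "\<bar>x powr g - y powr g\<bar> \<le> \<bar>x - y\<bar> powr g"
proof -
  have *: "\<bar>x powr g - y powr g\<bar> \<le> \<bar>x - y\<bar> powr g" if "0 \<le> y" "y \<le> x" for x y
  proof -
    have "x powr g = (y + (x - y)) powr g" by simp
    also have "\<dots> \<le> y powr g + (x - y) powr g" using powr_subadd[of y "x - y" g] that assms by simp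
    finally have "x powr g - y powr g \<le> \<bar>x - y\<bar> powr g" using that by simp
    moreover have "y powr g \<le> x powr g" using that assms by (intro powr_mono2) auto
    ultimately show ?thesis by simp
  qed
  show ?thesis
  proof (cases "y \<le> x")
    case True show ?thesis by (rule *[OF assms(2) True])
  next
    case False
    then show ?thesis using *[of x y] assms by (simp add: abs_minus_commute)
  qed
qed

lemma phi_le:
  fixes V V1 zp g g0 r :: real
  assumes V: "0 < V" and g: "0 < g" "g < 1" and gr: "g * r = g0"
  shows "(V powr g) powr (3*r-2) * zp^2 + (V powr g) powr (3*r-4) * (g * V powr (g-1) * V1)^4
     \<le> V powr (3*g0 - 2*g) * zp^2 + V powr (3*g0 - 4) * V1^4"
proof -
  have e1: "(V powr g) powr (3*r-2) = V powr (3*g0 - 2*g)"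
    by (simp add: powr_powr gr[symmetric] algebra_simps)
  have p4: "(V powr (g-1))^4 = V powr (4*g - 4)"
    using V by (simp add: powr_power algebra_simps)
  have "(V powr g) powr (3*r-4) * (g * V powr (g-1) * V1)^4
      = g^4 * ((V powr g) powr (3*r-4) * (V powr (g-1))^4) * V1^4"
    by (simp add: power_mult_distrib)
  also have "(V powr g) powr (3*r-4) * (V powr (g-1))^4 = V powr (3*g0 - 4)"
  proof -
    have "(V powr g) powr (3*r-4) = V powr (3*g0 - 4*g)"
      by (simp add: powr_powr gr[symmetric] algebra_simps)
    then show ?thesis unfolding p4 by (simp add: powr_add[symmetric])
  qed
  finally have e2: "(V powr g) powr (3*r-4) * (g * V powr (g-1) * V1)^4 = g^4 * (V powr (3*g0 - 4) * V1^4)"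
    by simp
  have "g^4 * (V powr (3*g0 - 4) * V1^4) \<le> 1 * (V powr (3*g0 - 4) * V1^4)"
  proof (rule mult_right_mono)
    show "g^4 \<le> 1" using g by (simp add: power_le_one)
    show "0 \<le> V powr (3*g0 - 4) * V1^4" by (simp add: zero_le_even_power)
  qed
  then show ?thesis unfolding e1 e2 by simp
qed

lemma stepB:
  fixes U UU UV :: "nat \<Rightarrow> real \<Rightarrow> real \<Rightarrow> real" and u :: "real \<Rightarrow> real \<Rightarrow> real"
    and a t \<gamma> gz ea eb K :: real
  assumes a: "0 < a" and t: "0 < t"
  and pos: "\<And>k x t. x \<in> {-a..a} \<Longrightarrow> 0 < t \<Longrightarrow> 0 < U k x t"
  and cU: "\<And>k. continuous_on ({-a..a} \<times> {0<..}) (\<lambda>p. U k (fst p) (snd p))"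
  and cU1: "\<And>k. continuous_on ({-a..a} \<times> {0<..}) (\<lambda>p. UU k (fst p) (snd p))"
  and cU2: "\<And>k. continuous_on ({-a..a} \<times> {0<..}) (\<lambda>p. UV k (fst p) (snd p))"
  and d1: "\<And>k x t. x \<in> {-a..a} \<Longrightarrow> 0 < t \<Longrightarrow> ((\<lambda>y. U k y t) has_real_derivative UU k x t) (at x within {-a..a})"
  and d2: "\<And>k x t. x \<in> {-a..a} \<Longrightarrow> 0 < t \<Longrightarrow> ((\<lambda>y. UU k y t) has_real_derivative UV k x t) (at x within {-a..a})"
  and bc: "\<And>k. UU k (-a) t = 0"
  and \<gamma>: "0 < gz" "gz < \<gamma>" "\<gamma> < 1"
  and ea: "ea = 3*gz - 2*\<gamma>" and eb: "eb = 3*gz - 4"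
  and K: "0 \<le> K"
  and freq: "\<exists>\<^sub>F k in sequentially. (\<integral>\<^sup>+ x. ennreal (indicator {-a<..<a} x *
      (G1f ea \<gamma> (U k) (UU k) (UV k) x t + G2f eb (U k) (UU k) x t)) \<partial>lborel) \<le> ennreal K"
  and conv: "\<And>e. 0 < e \<Longrightarrow> \<forall>\<^sub>F k in sequentially. \<forall>x\<in>{-a..a}. \<bar>U k x t - u x t\<bar> < e"
  and u0: "\<And>x. x \<in> {-a..a} \<Longrightarrow> 0 \<le> u x t"
  shows "\<exists>g. continuous_on {-a..a} g \<and>
     (\<forall>x\<in>{-a..a}. ((\<lambda>x. u x t powr \<gamma>) has_real_derivative g x) (at x within {-a..a}))"
proof -
  define r where "r = gz/\<gamma>"
  have r: "0 < r" "r < 1" using \<gamma> by (auto simp: r_def field_simps)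
  have \<gamma>r: "\<gamma> * r = gz" using \<gamma> by (simp add: r_def)
  have ct: "continuous_on {-a..a} (\<lambda>x. F (fst (x, t)) (snd (x, t)))"
    if "continuous_on ({-a..a} \<times> {0<..}) (\<lambda>p. F (fst p) (snd p))" for F :: "real \<Rightarrow> real \<Rightarrow> real"
    by (rule continuous_on_compose2[OF that, of _ "\<lambda>x. (x, t)"]) (use t in \<open>auto intro!: continuous_intros\<close>)
  have cUt: "continuous_on {-a..a} (\<lambda>x. U k x t)" for k using ct[OF cU[of k]] by simp
  have cU1t: "continuous_on {-a..a} (\<lambda>x. UU k x t)" for k using ct[OF cU1[of k]] by simp
  have cU2t: "continuous_on {-a..a} (\<lambda>x. UV k x t)" for k using ct[OF cU2[of k]] by simp
  obtain N1 where N1: "\<And>k x. N1 \<le> k \<Longrightarrow> x \<in> {-a..a} \<Longrightarrow> \<bar>U k x t - u x t\<bar> < 1"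
    using conv[of 1] unfolding eventually_sequentially by (metis zero_less_one)
  obtain B0 where B0: "\<forall>y\<in>(\<lambda>x. U N1 x t) ` {-a..a}. norm y \<le> B0"
    using compact_imp_bounded[OF compact_continuous_image[OF cUt[of N1] compact_Icc]]
    unfolding bounded_iff by blast
  obtain B where B: "\<And>x. x \<in> {-a..a} \<Longrightarrow> \<bar>U N1 x t\<bar> \<le> B"
  proof
    fix x assume "x \<in> {-a..a}"
    then show "\<bar>U N1 x t\<bar> \<le> B0" using B0 by (metis image_eqI real_norm_def)
  qed
  have Ub: "U k x t \<le> B + 2" if "N1 \<le> k" "x \<in> {-a..a}" for k x
    using N1[OF that] N1[OF order_refl that(2)] B[OF that(2)] by (simp add: abs_less_iff abs_le_iff)
  define S where "S = {k. (\<integral>\<^sup>+ x. ennreal (indicator {-a<..<a} x *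
      (G1f ea \<gamma> (U k) (UU k) (UV k) x t + G2f eb (U k) (UU k) x t)) \<partial>lborel) \<le> ennreal K}"
  have "\<exists>\<^sub>F k in cofinite. k \<in> S" using freq by (simp add: cofinite_eq_sequentially S_def)
  then have inf: "infinite S" by (simp add: frequently_cofinite)
  from infinite_enumerate[OF inf] obtain rr :: "nat \<Rightarrow> nat" where rr0: "strict_mono rr" "\<forall>n. rr n \<in> S"
    by (elim exE conjE) fast
  have rr: "strict_mono rr" "\<And>j. (\<integral>\<^sup>+ x. ennreal (indicator {-a<..<a} x *
      (G1f ea \<gamma> (U (rr j)) (UU (rr j)) (UV (rr j)) x t + G2f eb (U (rr j)) (UU (rr j)) x t)) \<partial>lborel) \<le> ennreal K"
    using rr0 unfolding S_def by simp_all
  define s where "s j = rr (j + N1)" for j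
  have sN: "N1 \<le> s j" "j \<le> s j" for j
    using seq_suble[OF rr(1), of "j + N1"] unfolding s_def by auto
  define w where "w j x = U (s j) x t powr \<gamma>" for j x
  define z where "z j x = zzf \<gamma> (U (s j)) (UU (s j)) x t" for j x
  define z' where "z' j x = zpf \<gamma> (U (s j)) (UU (s j)) (UV (s j)) x t" for j x
  have posj: "0 < U (s j) x t" if "x \<in> {-a..a}" for j x using pos[OF that t] .
  have nz: "\<forall>x\<in>{-a..a}. U (s j) x t \<noteq> 0" for j
  proof
    fix x assume "x \<in> {-a..a}"
    from posj[OF this, of j] show "U (s j) x t \<noteq> 0" by simp
  qed
  have gd: "good (-a) a r K (w j) (z j) (z' j)" for j
    unfolding good_def
  proof (intro conjI ballI allI impI)
    fix x assume x: "x \<in> {-a..a}"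
    show "0 < w j x" unfolding w_def using posj[OF x, of j] by simp
    show "(w j has_real_derivative z j x) (at x within {-a..a})"
      unfolding w_def z_def
      by (rule dzz(1)[where Va="U (s j)" and Vb="UU (s j)" and Vc="UV (s j)", OF posj[OF x, of j] d1[OF x t] d2[OF x t]])
    show "(z j has_real_derivative z' j x) (at x within {-a..a})"
      unfolding z_def z'_def
      by (rule dzz(2)[where Va="U (s j)" and Vb="UU (s j)" and Vc="UV (s j)", OF posj[OF x, of j] d1[OF x t] d2[OF x t]])
  next
    show "continuous_on {-a..a} (z' j)"
      unfolding z'_def zpf_def
      by (intro continuous_intros cUt cU1t cU2t) (simp_all add: nz)
  next
    show "z j (-a) = 0" unfolding z_def zzf_def by (simp add: bc)
  next
    fix x y assume xy: "-a \<le> x" "x \<le> y" "y \<le> a"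
    show "integral {x..y} (\<lambda>s. w j s powr (3*r-2) * (z' j s)^2 + w j s powr (3*r-4) * (z j s)^4) \<le> K"
    proof (rule intbound[OF _ _ _ rr(2)[of "j + N1"] K xy])
      show "continuous_on {-a..a} (\<lambda>s. w j s powr (3*r-2) * (z' j s)^2 + w j s powr (3*r-4) * (z j s)^4)"
        unfolding w_def z_def z'_def zzf_def zpf_def s_def[symmetric]
        by (intro continuous_intros cUt cU1t cU2t) (simp_all add: nz)
      fix p assume p: "p \<in> {-a..a}"
      show "0 \<le> w j p powr (3*r-2) * (z' j p)^2 + w j p powr (3*r-4) * (z j p)^4"
        by (simp add: zero_le_even_power)
    next
      fix p assume p: "p \<in> {-a<..<a}"
      then have p': "p \<in> {-a..a}" by auto
      show "w j p powr (3*r-2) * (z' j p)^2 + w j p powr (3*r-4) * (z j p)^4 \<le>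
          G1f ea \<gamma> (U (rr (j + N1))) (UU (rr (j + N1))) (UV (rr (j + N1))) p t +
          G2f eb (U (rr (j + N1))) (UU (rr (j + N1))) p t"
        unfolding w_def z_def z'_def zzf_def G1f_def G2f_def ea eb s_def
        by (rule phi_le[OF posj[OF p', of j, unfolded s_def] \<gamma>(1)[THEN less_trans, OF \<gamma>(2)] \<gamma>(3) \<gamma>r])
    qed
  qed
  have Mw0: "0 < (B + 2) powr \<gamma>"
  proof -
    have "0 \<le> B" using B[of a] a by auto
    then show ?thesis by simp
  qed
  have Mw: "w j x \<le> (B + 2) powr \<gamma>" if "x \<in> {-a..a}" for j x
    unfolding w_def using Ub[OF sN(1)[of j] that] posj[OF that, of j] \<gamma> by (intro powr_mono2) auto
  have convw: "\<forall>\<^sub>F j in sequentially. \<forall>x\<in>{-a..a}. \<bar>w j x - u x t powr \<gamma>\<bar> < e" if e: "0 < e" for e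
  proof -
    have e': "0 < e powr (1/\<gamma>)" using e by simp
    obtain Nk where Nk: "\<And>k x. Nk \<le> k \<Longrightarrow> x \<in> {-a..a} \<Longrightarrow> \<bar>U k x t - u x t\<bar> < e powr (1/\<gamma>)"
      using conv[OF e'] unfolding eventually_sequentially by (metis atLeastAtMost_iff)
    show ?thesis unfolding eventually_sequentially
    proof (intro exI[of _ Nk] allI impI ballI)
      fix j x assume j: "Nk \<le> j" and x: "x \<in> {-a..a}"
      have "\<bar>w j x - u x t powr \<gamma>\<bar> \<le> \<bar>U (s j) x t - u x t\<bar> powr \<gamma>"
        unfolding w_def by (rule powr_diff) (use posj[OF x, of j] u0[OF x] \<gamma> in auto)
      also have "\<dots> < (e powr (1/\<gamma>)) powr \<gamma>"
        using Nk[OF order_trans[OF j sN(2)] x] \<gamma> by (intro powr_less_mono2) auto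
      also have "\<dots> = e" using \<gamma> e by (simp add: powr_powr)
      finally show "\<bar>w j x - u x t powr \<gamma>\<bar> < e" .
    qed
  qed
  have K': "0 \<le> K" using K .
  show ?thesis
    by (rule seq_C1[where w=w and z=z and z'=z', OF _ r K' Mw0 gd Mw convw]) (use a in auto)
qed

theorem corollary3p4:
  fixes a n \<nu> A m M \<theta> :: real
    and u0 :: "real \<Rightarrow> real" and u0e :: "real \<Rightarrow> real \<Rightarrow> real"
    and eps :: "nat \<Rightarrow> real" and U :: "nat \<Rightarrow> real \<Rightarrow> real \<Rightarrow> real"
    and u :: "real \<Rightarrow> real \<Rightarrow> real" and \<Psi> :: "real set"
  assumes a_pos: "0 < a" and n_pos: "0 < n" and nu: "\<nu> = 1 \<or> \<nu> = -1"
    and A_nonneg: "0 \<le> A" and mM: "m < M" and theta: "0 < \<theta>"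
    and u0_H1: "in_H1 a u0" and u0_cont: "continuous_on {-a..a} u0"
    and u0_nonneg: "\<forall>x\<in>{-a..a}. 0 \<le> u0 x" and u0_nonzero: "\<exists>x\<in>{-a..a}. u0 x \<noteq> 0"
    and u0e: "\<forall>\<epsilon>>0. smooth_fun (u0e \<epsilon>) \<and>
                (\<forall>x\<in>{-a..a}. 0 < u0e \<epsilon> x \<and> u0 x + \<epsilon> powr \<theta> \<le> u0e \<epsilon> x)"
    and u0e_conv: "H1_conv a u0e u0"
    and eps_pos: "\<forall>k. 0 < eps k" and eps_lim: "eps \<longlonglongrightarrow> 0"
    and U_sol: "\<forall>k. classical_sol_eps a n \<nu> A m M (eps k) (u0e (eps k)) (U k)"
    and u_weak: "weak_sol a n \<nu> A m M u0 u"
    and U_conv: "\<forall>T>0. uniform_limit ({-a..a} \<times> {0..T})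
                   (\<lambda>k p. U k (fst p) (snd p)) (\<lambda>p. u (fst p) (snd p)) sequentially"
    and Psi_ne: "\<Psi> \<noteq> {}" and Psi_sub: "\<Psi> \<subseteq> {1/2 - n <..< 2 - n}"
    and bounds: "\<forall>\<alpha>\<in>\<Psi>. \<forall>T>0. \<exists>c1 c2 \<delta>. 0 < c1 \<and> 0 < c2 \<and> 0 < \<delta> \<and>
        (\<forall>\<gamma>. (1 + n + \<alpha>) / 3 \<le> \<gamma> \<and> \<gamma> \<le> (1 + n + \<alpha>) / 3 + \<delta> \<longrightarrow>
          (\<forall>k. QT_nn_integral a T (\<lambda>x t. U k x t powr (\<alpha> + n - 2 * \<gamma> + 1) *
                  (deriv (\<lambda>y. deriv (\<lambda>z. U k z t powr \<gamma>) y) x)\<^sup>2) \<le> ennreal c1 \<and>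
               QT_nn_integral a T (\<lambda>x t. U k x t powr (\<alpha> + n - 3) *
                  (deriv (\<lambda>y. U k y t) x) ^ 4) \<le> ennreal c2))"
  shows "AE t in lborel. 0 < t \<longrightarrow>
           (\<forall>\<beta>. 0 < \<beta> \<and> \<beta> < 3 / (n + Inf \<Psi> + 1) \<longrightarrow>
              C1_on_interval (-a) a (\<lambda>x. u x t powr (1 / \<beta>)))"
proof -
  have ex12: "\<forall>k. \<exists>p. continuous_on ({-a..a} \<times> {0<..}) (\<lambda>q. fst p (fst q) (snd q)) \<and>
      continuous_on ({-a..a} \<times> {0<..}) (\<lambda>q. snd p (fst q) (snd q)) \<and>
      (\<forall>x\<in>{-a..a}. \<forall>t>0. ((\<lambda>y. U k y t) has_real_derivative fst p x t) (at x within {-a..a}) \<and>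
          ((\<lambda>y. fst p y t) has_real_derivative snd p x t) (at x within {-a..a})) \<and>
      (\<forall>t>0. fst p (-a) t = 0)"
  proof
    fix k
    from U_sol[rule_format, of k] obtain u1 u2 u3 u4 ut where
      c1: "continuous_on ({-a..a} \<times> {0<..}) (\<lambda>p. u1 (fst p) (snd p))" and
      c2: "continuous_on ({-a..a} \<times> {0<..}) (\<lambda>p. u2 (fst p) (snd p))" and
      dd: "\<forall>x\<in>{-a..a}. \<forall>t>0.
           ((\<lambda>y. U k y t) has_real_derivative u1 x t) (at x within {-a..a}) \<and>
           ((\<lambda>y. u1 y t) has_real_derivative u2 x t) (at x within {-a..a})" and
      bcs: "\<forall>t>0. u1 (-a) t = 0"
      unfolding classical_sol_eps_def by blast
    show "\<exists>p. continuous_on ({-a..a} \<times> {0<..}) (\<lambda>q. fst p (fst q) (snd q)) \<and>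
      continuous_on ({-a..a} \<times> {0<..}) (\<lambda>q. snd p (fst q) (snd q)) \<and>
      (\<forall>x\<in>{-a..a}. \<forall>t>0. ((\<lambda>y. U k y t) has_real_derivative fst p x t) (at x within {-a..a}) \<and>
          ((\<lambda>y. fst p y t) has_real_derivative snd p x t) (at x within {-a..a})) \<and>
      (\<forall>t>0. fst p (-a) t = 0)"
      by (rule exI[of _ "(u1, u2)"]) (use c1 c2 dd bcs in auto)
  qed
  then obtain P :: "nat \<Rightarrow> (real \<Rightarrow> real \<Rightarrow> real) \<times> (real \<Rightarrow> real \<Rightarrow> real)" where P: "\<And>k. continuous_on ({-a..a} \<times> {0<..}) (\<lambda>q. fst (P k) (fst q) (snd q)) \<and>
      continuous_on ({-a..a} \<times> {0<..}) (\<lambda>q. snd (P k) (fst q) (snd q)) \<and>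
      (\<forall>x\<in>{-a..a}. \<forall>t>0. ((\<lambda>y. U k y t) has_real_derivative fst (P k) x t) (at x within {-a..a}) \<and>
          ((\<lambda>y. fst (P k) y t) has_real_derivative snd (P k) x t) (at x within {-a..a})) \<and>
      (\<forall>t>0. fst (P k) (-a) t = 0)"
    using choice[OF ex12] by blast
  define U1 where "U1 k = fst (P k)" for k
  define U2 where "U2 k = snd (P k)" for k
  have cU1: "\<And>k. continuous_on ({-a..a} \<times> {0<..}) (\<lambda>p. U1 k (fst p) (snd p))"
    using P unfolding U1_def by blast
  have cU2: "\<And>k. continuous_on ({-a..a} \<times> {0<..}) (\<lambda>p. U2 k (fst p) (snd p))"
    using P unfolding U2_def by blast
  have d1: "\<And>k x t. x \<in> {-a..a} \<Longrightarrow> 0 < t \<Longrightarrow> ((\<lambda>y. U k y t) has_real_derivative U1 k x t) (at x within {-a..a})"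
    using P unfolding U1_def by blast
  have d2: "\<And>k x t. x \<in> {-a..a} \<Longrightarrow> 0 < t \<Longrightarrow> ((\<lambda>y. U1 k y t) has_real_derivative U2 k x t) (at x within {-a..a})"
    using P unfolding U1_def U2_def by blast
  have bc: "\<And>k t. 0 < t \<Longrightarrow> U1 k (-a) t = 0"
    using P unfolding U1_def by blast
  have pos: "\<And>k x t. x \<in> {-a..a} \<Longrightarrow> 0 < t \<Longrightarrow> 0 < U k x t"
    using U_sol unfolding classical_sol_eps_def by (meson less_imp_le)
  have cU: "\<And>k. continuous_on ({-a..a} \<times> {0<..}) (\<lambda>p. U k (fst p) (snd p))"
  proof -
    fix k
    have "continuous_on ({-a..a} \<times> {0..}) (\<lambda>p. U k (fst p) (snd p))"
      using U_sol unfolding classical_sol_eps_def by blast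
    then show "continuous_on ({-a..a} \<times> {0<..}) (\<lambda>p. U k (fst p) (snd p))"
      by (rule continuous_on_subset) auto
  qed
  have u0: "\<And>x t. x \<in> {-a..a} \<Longrightarrow> 0 < t \<Longrightarrow> 0 \<le> u x t"
    using u_weak unfolding weak_sol_def by (meson less_imp_le)
  have bddP: "bdd_below \<Psi>" using Psi_sub by (auto intro!: bdd_belowI[of _ "1/2 - n"])
  have "\<forall>j::nat. \<exists>\<alpha>\<in>\<Psi>. \<alpha> < Inf \<Psi> + 1 / real (Suc j)"
  proof
    fix j :: nat
    have "Inf \<Psi> < Inf \<Psi> + 1 / real (Suc j)" by simp
    then show "\<exists>\<alpha>\<in>\<Psi>. \<alpha> < Inf \<Psi> + 1 / real (Suc j)"
      using cInf_less_iff[OF Psi_ne bddP] by blast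
  qed
  then obtain \<alpha>s :: "nat \<Rightarrow> real" where \<alpha>s: "\<And>j. \<alpha>s j \<in> \<Psi>" "\<And>j. \<alpha>s j < Inf \<Psi> + 1 / real (Suc j)"
    using bchoice[of UNIV] by (metis UNIV_I)
  define g0 where "g0 j = (1 + n + \<alpha>s j) / 3" for j
  have g0: "0 < g0 j" "g0 j < 1" for j
    using Psi_sub \<alpha>s(1)[of j] n_pos unfolding g0_def by auto
  define Prop where "Prop j t \<gamma> \<longleftrightarrow> (\<exists>K\<ge>0. \<exists>\<^sub>F k in sequentially.
     (\<integral>\<^sup>+ x. ennreal (indicator {-a<..<a} x * (G1f (\<alpha>s j + n - 2*\<gamma> + 1) \<gamma> (U k) (U1 k) (U2 k) x t
        + G2f (\<alpha>s j + n - 3) (U k) (U1 k) x t)) \<partial>lborel) \<le> ennreal K)" for j t \<gamma>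
  have AEjN: "AE t in lborel. t \<in> {0<..<real N + 1} \<longrightarrow>
     (\<exists>\<gamma>. g0 j < \<gamma> \<and> \<gamma> \<le> g0 j + 1 / real (Suc j) \<and> \<gamma> < 1 \<and> Prop j t \<gamma>)" for j N :: nat
  proof -
    define T where "T = real N + 1"
    have T: "0 < T" unfolding T_def by simp
    obtain c1 c2 \<delta> :: real where c: "0 < c1" "0 < c2" "0 < \<delta>" and
      cb: "\<And>\<gamma>. (1 + n + \<alpha>s j) / 3 \<le> \<gamma> \<Longrightarrow> \<gamma> \<le> (1 + n + \<alpha>s j) / 3 + \<delta> \<Longrightarrow>
          (\<forall>k. QT_nn_integral a T (\<lambda>x t. U k x t powr (\<alpha>s j + n - 2 * \<gamma> + 1) *
                  (deriv (\<lambda>y. deriv (\<lambda>z. U k z t powr \<gamma>) y) x)\<^sup>2) \<le> ennreal c1 \<and>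
               QT_nn_integral a T (\<lambda>x t. U k x t powr (\<alpha>s j + n - 3) *
                  (deriv (\<lambda>y. U k y t) x) ^ 4) \<le> ennreal c2)"
      using bounds[rule_format, OF \<alpha>s(1)[of j] T] by blast
    define \<gamma> where "\<gamma> = g0 j + min \<delta> (min (1 / real (Suc j)) ((1 - g0 j) / 2))"
    define m where "m = min \<delta> (min (1 / real (Suc j)) ((1 - g0 j) / 2))"
    have m: "0 < m" "m \<le> \<delta>" "m \<le> 1 / real (Suc j)" "m \<le> (1 - g0 j) / 2"
      unfolding m_def
      apply (use c g0[of j] in simp)
      apply (rule min.cobounded1)
      apply (rule order_trans[OF min.cobounded2 min.cobounded1])
      apply (rule order_trans[OF min.cobounded2 min.cobounded2])
      done
    have \<gamma>: "g0 j < \<gamma>" "\<gamma> \<le> g0 j + 1 / real (Suc j)" "\<gamma> < 1" "\<gamma> \<le> g0 j + \<delta>"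
      using m g0[of j] unfolding \<gamma>_def m_def[symmetric] by auto
    have b: "\<forall>k. QT_nn_integral a T (\<lambda>x t. U k x t powr (\<alpha>s j + n - 2 * \<gamma> + 1) *
                  (deriv (\<lambda>y. deriv (\<lambda>z. U k z t powr \<gamma>) y) x)\<^sup>2) \<le> ennreal c1 \<and>
               QT_nn_integral a T (\<lambda>x t. U k x t powr (\<alpha>s j + n - 3) *
                  (deriv (\<lambda>y. U k y t) x) ^ 4) \<le> ennreal c2"
      by (rule cb) (use \<gamma> in \<open>auto simp: g0_def\<close>)
    have "AE t in lborel. t \<in> {0<..<T} \<longrightarrow> Prop j t \<gamma>"
      unfolding Prop_def
      by (rule stepA[where ca=c1 and cb=c2 and \<gamma>=\<gamma>, OF a_pos T _ _ pos cU cU1 cU2 d1 d2]) (use c b in auto)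
    then show ?thesis
      by eventually_elim (use \<gamma> in \<open>auto simp: T_def\<close>)
  qed
  have AEall: "AE t in lborel. \<forall>j N :: nat. t \<in> {0<..<real N + 1} \<longrightarrow>
     (\<exists>\<gamma>. g0 j < \<gamma> \<and> \<gamma> \<le> g0 j + 1 / real (Suc j) \<and> \<gamma> < 1 \<and> Prop j t \<gamma>)"
    unfolding AE_all_countable using AEjN by blast
  show ?thesis
    using AEall
  proof eventually_elim
    case (elim t)
    show ?case
    proof (intro impI allI)
      assume t: "0 < t"
      fix \<beta> assume \<beta>: "0 < \<beta> \<and> \<beta> < 3 / (n + Inf \<Psi> + 1)"
      define N where "N = nat \<lceil>t\<rceil>"
      have tN: "t \<in> {0<..<real N + 1}"
      proof -
        have c0: "0 \<le> \<lceil>t\<rceil>" using t by simp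
        have "real N = real_of_int \<lceil>t\<rceil>" unfolding N_def using c0 by simp
        moreover have "t \<le> real_of_int \<lceil>t\<rceil>" by (rule le_of_int_ceiling)
        ultimately have "t < real N + 1" by linarith
        then show ?thesis using t by simp
      qed
      define ginf where "ginf = (1 + n + Inf \<Psi>) / 3"
      have infb: "1/2 - n \<le> Inf \<Psi>"
        using Psi_sub Psi_ne by (intro cInf_greatest) auto
      have ginf_pos: "0 < n + Inf \<Psi> + 1" using infb n_pos by linarith
      have gb: "ginf < 1 / \<beta>"
      proof -
        have "\<beta> * (n + Inf \<Psi> + 1) < 3" using \<beta> ginf_pos by (simp add: field_simps)
        then show ?thesis unfolding ginf_def using \<beta> by (simp add: field_simps)
      qed
      obtain j where j: "inverse (real (Suc j)) < (1 / \<beta> - ginf) / 2"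
        using reals_Archimedean[of "(1 / \<beta> - ginf) / 2"] gb by auto
      obtain \<gamma> where \<gamma>: "g0 j < \<gamma>" "\<gamma> \<le> g0 j + 1 / real (Suc j)" "\<gamma> < 1" "Prop j t \<gamma>"
        using elim tN by blast
      obtain K where K: "0 \<le> K" "\<exists>\<^sub>F k in sequentially.
         (\<integral>\<^sup>+ x. ennreal (indicator {-a<..<a} x * (G1f (\<alpha>s j + n - 2*\<gamma> + 1) \<gamma> (U k) (U1 k) (U2 k) x t
            + G2f (\<alpha>s j + n - 3) (U k) (U1 k) x t)) \<partial>lborel) \<le> ennreal K"
        using \<gamma>(4) unfolding Prop_def by blast
      have g0j: "g0 j < ginf + 1 / real (Suc j)"
        using \<alpha>s(2)[of j] unfolding g0_def ginf_def by (simp add: field_simps)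
      have \<gamma>\<beta>: "\<gamma> \<le> 1 / \<beta>"
        using \<gamma>(2) g0j j by (simp add: inverse_eq_divide)
      have conv: "\<forall>\<^sub>F k in sequentially. \<forall>x\<in>{-a..a}. \<bar>U k x t - u x t\<bar> < e" if e: "0 < e" for e
      proof -
        have T: "0 < real N + 1" by simp
        have "uniform_limit ({-a..a} \<times> {0..real N + 1}) (\<lambda>k p. U k (fst p) (snd p)) (\<lambda>p. u (fst p) (snd p)) sequentially"
          using U_conv T by blast
        then have "\<forall>\<^sub>F k in sequentially. \<forall>p\<in>{-a..a} \<times> {0..real N + 1}. dist (U k (fst p) (snd p)) (u (fst p) (snd p)) < e"
          unfolding uniform_limit_iff using e by blast
        then show ?thesis
        proof eventually_elim
          case (elim k)
          show ?case
          proof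
            fix x assume x: "x \<in> {-a..a}"
            then have "(x, t) \<in> {-a..a} \<times> {0..real N + 1}" using tN by auto
            then show "\<bar>U k x t - u x t\<bar> < e" using elim by (force simp: dist_real_def)
          qed
        qed
      qed
      have "\<exists>g. continuous_on {-a..a} g \<and>
         (\<forall>x\<in>{-a..a}. ((\<lambda>x. u x t powr \<gamma>) has_real_derivative g x) (at x within {-a..a}))"
      proof (rule stepB[where U=U and UU=U1 and UV=U2 and u=u and a=a and t=t and \<gamma>=\<gamma> and gz="g0 j"
            and ea="\<alpha>s j + n - 2*\<gamma> + 1" and eb="\<alpha>s j + n - 3" and K=K])
        show "0 < g0 j" "g0 j < \<gamma>" "\<gamma> < 1" using g0 \<gamma> by auto
        show "\<alpha>s j + n - 2 * \<gamma> + 1 = 3 * g0 j - 2 * \<gamma>" "\<alpha>s j + n - 3 = 3 * g0 j - 4"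
          unfolding g0_def by simp_all
      qed (use a_pos t pos cU cU1 cU2 d1 d2 bc[OF t] K conv u0[OF _ t] in auto)
      then obtain g where g: "continuous_on {-a..a} g"
        "\<forall>x\<in>{-a..a}. ((\<lambda>x. u x t powr \<gamma>) has_real_derivative g x) (at x within {-a..a})"
        by blast
      have p: "1 \<le> 1 / (\<beta> * \<gamma>)"
      proof -
        have "\<beta> * \<gamma> \<le> 1" using \<gamma>\<beta> \<beta> by (simp add: field_simps)
        moreover have "0 < \<beta> * \<gamma>" using \<beta> \<gamma>(1) g0[of j] by simp
        ultimately show ?thesis by simp
      qed
      have "C1_on_interval (-a) a (\<lambda>x. (u x t powr \<gamma>) powr (1 / (\<beta> * \<gamma>)))"
        by (rule powr_C1[where W="\<lambda>x. u x t powr \<gamma>" and g=g, OF _ _ g(1) p]) (use g(2) in auto)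
      moreover have "(\<lambda>x. (u x t powr \<gamma>) powr (1 / (\<beta> * \<gamma>))) = (\<lambda>x. u x t powr (1 / \<beta>))"
        using \<beta> \<gamma>(1) g0[of j] by (simp add: powr_powr)
      ultimately show "C1_on_interval (-a) a (\<lambda>x. u x t powr (1 / \<beta>))" by simp
    qed
  qed
qed


end
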